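(* For every bad normalized fully ternary string $s\neq 0212$ of length $n$ ending in $2$, $d_{\rm s}(s)=n-2$.
   Context: Strings are finite words over $\{0,1,2,\dots\}$. A string is \emph{normalized} if no two adjacent symbols are equal; the \emph{normalization} of a string replaces every maximal run of identical symbols by a single copy. A string is \emph{fully $k$-ary} if the set of symbols occurring in it is exactly $\{0,\dots,k-1\}$; fully ternary means fully $3$-ary. For a normalized string $s=s_1\cdots s_n$ and $1\le i\le n$, the flip $f^{(i)}(s)$ is the normalization of $s_i\cdots s_1 s_{i+1}\cdots s_n$. The sorting distance $d_{\rm s}(s)$ of a normalized fully ternary string is the minimum number of flips needed to transform $s$ into $012$. Regular-expression notation: $w^i$ is $i$ repetitions of $w$, $w^*$ is zero or more, $w^+$ one or more, $w^{\ge 2}$ two or more repetitions; $\{a,b\}$ denotes a single symbol that is either $a$ or $b$ (chosen independently at each occurrence). A normalized fully ternary string ending in $2$ is \emph{bad} (for sorting; no relabelling allowed) if it is of one of the following types: (I) $0(12)^{\ge 2}$; (II) $(\{0,1\}2)^+$ or $2(\{0,1\}2)^+$; (III) $(\{1,2\}0)^+2$ or $0(\{1,2\}0)^+2$; (IV) $(\{1,2\}0)^+12$ or $(0\{1,2\})^+012$, in either case containing at least two occurrences of $2$; (V) $(01)^*0212$ or $(10)^+212$; (VI) $1(20)^+1(20)^*2$ or $0(21)^+0(21)^*2$; (VII) $1(02)^+1(02)^+$; (VIII) $1(02)^+12$; (IX) one of the following 77 strings: 210212, 021012, 212012, 120102, 201202, 0210202, 1021202, 0212012, 2120102, 0102102,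 1212012, 2010212, 0120212, 1201012, 1201212, 2012012, 10210212, 21021212, 02102012, 02101212, 10212012, 02121012, 02120102, 10102102, 02010212, 21202012, 21201012, 21201202, 20210212, 01021202, 01020212, 20212012, 12120102, 12010212, 12010202, 20120102, 12012012, 021021202, 102120102, 102010212, 021202012, 021201012, 020210212, 101020212, 020212012, 212010202, 212012012, 010210212, 010210202, 010212012, 202010212, 121202012, 121201202, 201021202, 120212012, 012021212, 120102012, 201202012, 120120212, 201201012, 0210212012, 1021202012, 1021201012, 1020210212, 1010210202, 0202010212, 2120202012, 2120102012, 2021021212, 2010212012, 1201021202, 1201202012, 10202010212, 02120102012, 02021021212, 21201202012, 12120202012. All other normalized fully ternary strings ending in $2$ are \emph{good}. *)

theory Defs
  imports Main
begin

definition normalized :: "nat list \<Rightarrow> bool" where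
  "normalized s \<longleftrightarrow> (\<forall>i. Suc i < length s \<longrightarrow> s ! i \<noteq> s ! Suc i)"

definition normalization :: "nat list \<Rightarrow> nat list" where
  "normalization s = remdups_adj s"

definition fully_kary :: "nat \<Rightarrow> nat list \<Rightarrow> bool" where
  "fully_kary k s \<longleftrightarrow> set s = {0..<k}"

definition fully_ternary :: "nat list \<Rightarrow> bool" where
  "fully_ternary s \<longleftrightarrow> fully_kary 3 s"

definition flip :: "nat \<Rightarrow> nat list \<Rightarrow> nat list" where
  "flip i s = normalization (rev (take i s) @ drop i s)"

definition flip_step :: "nat list \<Rightarrow> nat list \<Rightarrow> bool" where
  "flip_step s t \<longleftrightarrow> (\<exists>i. 1 \<le> i \<and> i \<le> length s \<and> t = flip i s)"

definition sorting_distance :: "nat list \<Rightarrow> nat" where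
  "sorting_distance s = (LEAST k. (flip_step ^^ k) s [0,1,2])"

text \<open>Regular-expression style repetition: concatenations of at least m words from L.
  reps L 0 = L^*, reps L 1 = L^+, reps L 2 = L^{>=2}.\<close>
definition reps :: "nat list set \<Rightarrow> nat \<Rightarrow> nat list set" where
  "reps L m = {concat ws | ws. set ws \<subseteq> L \<and> m \<le> length ws}"

definition count2 :: "nat list \<Rightarrow> nat" where
  "count2 s = length (filter (\<lambda>x. x = 2) s)"

definition typeI :: "nat list \<Rightarrow> bool" where
  "typeI s \<longleftrightarrow> (\<exists>w \<in> reps {[1,2]} 2. s = [0] @ w)"

definition typeII :: "nat list \<Rightarrow> bool" where
  "typeII s \<longleftrightarrow> (\<exists>w \<in> reps {[0,2],[1,2]} 1. s = w \<or> s = [2] @ w)"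

definition typeIII :: "nat list \<Rightarrow> bool" where
  "typeIII s \<longleftrightarrow> (\<exists>w \<in> reps {[1,0],[2,0]} 1. s = w @ [2] \<or> s = [0] @ w @ [2])"

definition typeIV :: "nat list \<Rightarrow> bool" where
  "typeIV s \<longleftrightarrow> 2 \<le> count2 s \<and>
     ((\<exists>w \<in> reps {[1,0],[2,0]} 1. s = w @ [1,2]) \<or>
      (\<exists>w \<in> reps {[0,1],[0,2]} 1. s = w @ [0,1,2]))"

definition typeV :: "nat list \<Rightarrow> bool" where
  "typeV s \<longleftrightarrow> (\<exists>w \<in> reps {[0,1]} 0. s = w @ [0,2,1,2]) \<or>
                (\<exists>w \<in> reps {[1,0]} 1. s = w @ [2,1,2])"

definition typeVI :: "nat list \<Rightarrow> bool" where
  "typeVI s \<longleftrightarrow>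
     (\<exists>w \<in> reps {[2,0]} 1. \<exists>v \<in> reps {[2,0]} 0. s = [1] @ w @ [1] @ v @ [2]) \<or>
     (\<exists>w \<in> reps {[2,1]} 1. \<exists>v \<in> reps {[2,1]} 0. s = [0] @ w @ [0] @ v @ [2])"

definition typeVII :: "nat list \<Rightarrow> bool" where
  "typeVII s \<longleftrightarrow> (\<exists>w \<in> reps {[0,2]} 1. \<exists>v \<in> reps {[0,2]} 1. s = [1] @ w @ [1] @ v)"

definition typeVIII :: "nat list \<Rightarrow> bool" where
  "typeVIII s \<longleftrightarrow> (\<exists>w \<in> reps {[0,2]} 1. s = [1] @ w @ [1,2])"

definition exceptional_strings :: "nat list list" where
  "exceptional_strings = [
    [2,1,0,2,1,2],
    [0,2,1,0,1,2],
    [2,1,2,0,1,2],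
    [1,2,0,1,0,2],
    [2,0,1,2,0,2],
    [0,2,1,0,2,0,2],
    [1,0,2,1,2,0,2],
    [0,2,1,2,0,1,2],
    [2,1,2,0,1,0,2],
    [0,1,0,2,1,0,2],
    [1,2,1,2,0,1,2],
    [2,0,1,0,2,1,2],
    [0,1,2,0,2,1,2],
    [1,2,0,1,0,1,2],
    [1,2,0,1,2,1,2],
    [2,0,1,2,0,1,2],
    [1,0,2,1,0,2,1,2],
    [2,1,0,2,1,2,1,2],
    [0,2,1,0,2,0,1,2],
    [0,2,1,0,1,2,1,2],
    [1,0,2,1,2,0,1,2],
    [0,2,1,2,1,0,1,2],
    [0,2,1,2,0,1,0,2],
    [1,0,1,0,2,1,0,2],
    [0,2,0,1,0,2,1,2],
    [2,1,2,0,2,0,1,2],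
    [2,1,2,0,1,0,1,2],
    [2,1,2,0,1,2,0,2],
    [2,0,2,1,0,2,1,2],
    [0,1,0,2,1,2,0,2],
    [0,1,0,2,0,2,1,2],
    [2,0,2,1,2,0,1,2],
    [1,2,1,2,0,1,0,2],
    [1,2,0,1,0,2,1,2],
    [1,2,0,1,0,2,0,2],
    [2,0,1,2,0,1,0,2],
    [1,2,0,1,2,0,1,2],
    [0,2,1,0,2,1,2,0,2],
    [1,0,2,1,2,0,1,0,2],
    [1,0,2,0,1,0,2,1,2],
    [0,2,1,2,0,2,0,1,2],
    [0,2,1,2,0,1,0,1,2],
    [0,2,0,2,1,0,2,1,2],
    [1,0,1,0,2,0,2,1,2],
    [0,2,0,2,1,2,0,1,2],
    [2,1,2,0,1,0,2,0,2],
    [2,1,2,0,1,2,0,1,2],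
    [0,1,0,2,1,0,2,1,2],
    [0,1,0,2,1,0,2,0,2],
    [0,1,0,2,1,2,0,1,2],
    [2,0,2,0,1,0,2,1,2],
    [1,2,1,2,0,2,0,1,2],
    [1,2,1,2,0,1,2,0,2],
    [2,0,1,0,2,1,2,0,2],
    [1,2,0,2,1,2,0,1,2],
    [0,1,2,0,2,1,2,1,2],
    [1,2,0,1,0,2,0,1,2],
    [2,0,1,2,0,2,0,1,2],
    [1,2,0,1,2,0,2,1,2],
    [2,0,1,2,0,1,0,1,2],
    [0,2,1,0,2,1,2,0,1,2],
    [1,0,2,1,2,0,2,0,1,2],
    [1,0,2,1,2,0,1,0,1,2],
    [1,0,2,0,2,1,0,2,1,2],
    [1,0,1,0,2,1,0,2,0,2],
    [0,2,0,2,0,1,0,2,1,2],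
    [2,1,2,0,2,0,2,0,1,2],
    [2,1,2,0,1,0,2,0,1,2],
    [2,0,2,1,0,2,1,2,1,2],
    [2,0,1,0,2,1,2,0,1,2],
    [1,2,0,1,0,2,1,2,0,2],
    [1,2,0,1,2,0,2,0,1,2],
    [1,0,2,0,2,0,1,0,2,1,2],
    [0,2,1,2,0,1,0,2,0,1,2],
    [0,2,0,2,1,0,2,1,2,1,2],
    [2,1,2,0,1,2,0,2,0,1,2],
    [1,2,1,2,0,2,0,2,0,1,2]]"

definition typeIX :: "nat list \<Rightarrow> bool" where
  "typeIX s \<longleftrightarrow> s \<in> set exceptional_strings"

definition bad :: "nat list \<Rightarrow> bool" where
  "bad s \<longleftrightarrow> normalized s \<and> fully_ternary s \<and> s \<noteq> [] \<and> last s = 2 \<and>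
     (typeI s \<or> typeII s \<or> typeIII s \<or> typeIV s \<or> typeV s \<or> typeVI s \<or>
      typeVII s \<or> typeVIII s \<or> typeIX s)"

end

theory Submission
  imports Defs
begin

lemma normalized_iff: "normalized s \<longleftrightarrow> distinct_adj s"
  by (simp add: normalized_def distinct_adj_conv_nth)

definition R :: "nat \<Rightarrow> nat list \<Rightarrow> nat list" where
  "R i s = rev (take (i - 1) (tl s)) @ drop (i - 1) (tl s)"

lemma remdups_adj_dup: "remdups_adj (xs @ x # x # ys) = remdups_adj (xs @ x # ys)"
proof -
  have "remdups_adj (xs @ x # (x # ys)) = remdups_adj (xs @ [x]) @ tl (remdups_adj (x # x # ys))"
    by (rule remdups_adj_append)
  also have "\<dots> = remdups_adj (xs @ [x]) @ tl (remdups_adj (x # ys))" by simp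
  also have "\<dots> = remdups_adj (xs @ x # ys)" by (rule remdups_adj_append[symmetric])
  finally show ?thesis by simp
qed

lemma R_alt: "s \<noteq> [] \<Longrightarrow> 1 \<le> i \<Longrightarrow> R i s = rev (take (i - 1) (tl s)) @ drop i s"
  by (cases s; cases i) (auto simp: R_def)

lemma dtake: "distinct_adj xs \<Longrightarrow> distinct_adj (take m xs)"
  using distinct_adj_appendD1[of "take m xs" "drop m xs"] by simp

lemma ddrop: "distinct_adj xs \<Longrightarrow> distinct_adj (drop m xs)"
  using distinct_adj_appendD2[of "take m xs" "drop m xs"] by simp

lemma flip_norm:
  assumes "normalized s" "1 \<le> i" "i \<le> length s"
  shows "flip i s = (if i < length s \<and> s!i = s!0 then R i s else rev (take i s) @ drop i s)"
proof -
  obtain s0 s' where s: "s = s0 # s'" using assms by (cases s) auto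
  have da: "distinct_adj s" using assms(1) normalized_iff by blast
  have tk: "rev (take i s) = rev (take (i-1) s') @ [s0]" using assms(2) s
    by (cases i) auto
  have dr: "drop i s = drop (i-1) s'" using assms(2) s by (cases i) auto
  show ?thesis
  proof (cases "i < length s \<and> s!i = s!0")
    case True
    have ilt: "i - 1 < length s'" using True s assms(2) by auto
    have si: "s'!(i-1) = s0" using True s assms(2) by (cases i) auto
    have "drop (i-1) s' = s0 # drop i s'"
      using Cons_nth_drop_Suc[OF ilt] si assms(2) by simp
    then have eq: "rev (take i s) @ drop i s = rev (take (i-1) s') @ s0 # s0 # drop i s'"
      using tk dr by simp
    have "distinct_adj (R i s)"
    proof -
      have ds': "distinct_adj s'" using da unfolding s by (rule distinct_adj_ConsD)
      have d1: "distinct_adj (rev (take (i-1) s'))" using dtake[OF ds'] by simp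
      have d2: "distinct_adj (drop (i-1) s')" using ddrop[OF ds'] by simp
      have "take (i-1) s' = [] \<or> drop (i-1) s' = [] \<or> last (rev (take (i-1) s')) \<noteq> hd (drop (i-1) s')"
      proof (cases "i - 1 = 0")
        case False
        then have "s' \<noteq> []" using True s by auto
        then have "last (rev (take (i-1) s')) = s'!0" using False
          by (simp add: last_rev hd_take hd_conv_nth)
        moreover have "hd (drop (i-1) s') = s0" using \<open>drop (i-1) s' = s0 # drop i s'\<close> by simp
        moreover have "s'!0 \<noteq> s0" using da s \<open>s' \<noteq> []\<close>
          by (cases s') auto
        ultimately show ?thesis by auto
      qed simp
      then show ?thesis unfolding R_def s using d1 d2
        by (auto simp: distinct_adj_append_iff)
    qed
    then have "remdups_adj (R i s) = R i s" by (simp add: distinct_adj_altdef)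
    moreover have "R i s = rev (take (i-1) s') @ s0 # drop i s'"
      unfolding R_def s using \<open>drop (i-1) s' = s0 # drop i s'\<close> by simp
    ultimately show ?thesis using True eq
      by (simp add: flip_def normalization_def remdups_adj_dup)
  next
    case False
    have "distinct_adj (rev (take i s) @ drop i s)"
    proof -
      have d1: "distinct_adj (rev (take i s))" using dtake[OF da] by simp
      have d2: "distinct_adj (drop i s)" using ddrop[OF da] by simp
      have "drop i s = [] \<or> last (rev (take i s)) \<noteq> hd (drop i s)"
      proof (cases "i < length s")
        case True
        then have "last (rev (take i s)) = s!0" using assms(2) s
          by (simp add: last_rev hd_take)
        moreover have "hd (drop i s) = s!i" using True by (simp add: hd_drop_conv_nth)
        ultimately show ?thesis using False True by auto
      qed simp
      then show ?thesis using d1 d2 by (auto simp: distinct_adj_append_iff)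
    qed
    then show ?thesis using False by (auto simp: flip_def normalization_def distinct_adj_altdef)
  qed
qed

fun reachf :: "nat \<Rightarrow> nat list \<Rightarrow> bool" where
  "reachf 0 s = (s = [0,1,2])"
| "reachf (Suc k) s = (\<exists>i\<in>set [1..<Suc (length s)]. reachf k (flip i s))"

lemma reachf_sound: "reachf k s \<Longrightarrow> (flip_step ^^ k) s [0,1,2]"
proof (induction k arbitrary: s)
  case 0 then show ?case by simp
next
  case (Suc k)
  then obtain i where i: "1 \<le> i" "i \<le> length s" "reachf k (flip i s)" by auto
  then have "flip_step s (flip i s)" by (auto simp: flip_step_def)
  then show ?case using Suc.IH[OF i(3)] by (rule relpowp_Suc_I2)
qed

lemma stepR:
  assumes "normalized s" "1 \<le> i" "i < length s" "s!i = s!0" "(flip_step ^^ k) (R i s) z"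
  shows "(flip_step ^^ Suc k) s z"
proof -
  have "flip i s = R i s" using flip_norm[OF assms(1,2)] assms(3,4) by simp
  then have "flip_step s (R i s)" using assms(2,3) unfolding flip_step_def
    by (metis less_imp_le)
  then show ?thesis using assms(5) by (rule relpowp_Suc_I2)
qed

lemma stepN:
  assumes "normalized s" "1 \<le> i" "i < length s" "s!i \<noteq> s!0"
    "(flip_step ^^ k) (rev (take i s) @ drop i s) z"
  shows "(flip_step ^^ Suc k) s z"
proof -
  have "flip i s = rev (take i s) @ drop i s" using flip_norm[OF assms(1,2)] assms(3,4) by simp
  then have "flip_step s (rev (take i s) @ drop i s)" using assms(2,3) unfolding flip_step_def
    by (metis less_imp_le)
  then show ?thesis using assms(5) by (rule relpowp_Suc_I2)
qed

lemma pad: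
  assumes "(flip_step ^^ k) s [0,1,2]" "k \<le> m"
  shows "(flip_step ^^ m) s [0,1,2]"
proof -
  have st: "flip_step [0,1,2] [0,1,2]"
    unfolding flip_step_def by (rule exI[of _ 1]) (simp add: flip_def normalization_def)
  have "(flip_step ^^ (k + d)) s [0,1,2]" for d
  proof (induction d)
    case 0 then show ?case using assms(1) by simp
  next
    case (Suc d) then show ?case using relpowp_Suc_I[OF Suc.IH st] by simp
  qed
  from this[of "m - k"] show ?thesis using assms(2) by simp
qed

definition cr :: "nat \<Rightarrow> nat list \<Rightarrow> nat list" where
  "cr k w = concat (replicate k w)"

lemma cr_0[simp]: "cr 0 w = []" and cr_Suc[simp]: "cr (Suc k) w = w @ cr k w"
  by (simp_all add: cr_def)

lemma cr_rot: "x # cr m [y,x] = cr m [x,y] @ [x]"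
  by (induction m) auto

lemma cr_len[simp]: "length (cr m w) = m * length w"
  by (simp add: cr_def length_concat sum_list_replicate)

lemma da_cr: "a \<noteq> b \<Longrightarrow> distinct_adj (x # cr m [a,b] @ ys) \<longleftrightarrow>
   (if m = 0 then distinct_adj (x # ys) else x \<noteq> a \<and> distinct_adj (b # ys))"
proof (induction m arbitrary: x)
  case 0 then show ?case by simp
next
  case (Suc m)
  show ?case using Suc.IH[of b] Suc.prems by auto
qed

lemma da_cr0: "a \<noteq> b \<Longrightarrow> distinct_adj (x # cr m [a,b]) \<longleftrightarrow> (m = 0 \<or> x \<noteq> a)"
  using da_cr[of a b x m "[]"] by auto

definition fA :: "nat \<Rightarrow> nat list" where "fA k = [2,0] @ cr k [1,2]"
definition fB :: "nat \<Rightarrow> nat list" where "fB k = [1,0] @ cr k [2,1] @ [2]"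
definition fE :: "nat \<Rightarrow> nat list" where "fE k = [0,1] @ cr k [2,0] @ [2]"
definition fF :: "nat \<Rightarrow> nat list" where "fF k = [2,1] @ cr k [0,2]"

lemma nA: "normalized (fA k)" by (simp add: fA_def normalized_iff da_cr0)
lemma nB: "normalized (fB k)" by (cases k) (simp_all add: fB_def normalized_iff da_cr)
lemma nE: "normalized (fE k)" by (cases k) (simp_all add: fE_def normalized_iff da_cr)
lemma nF: "normalized (fF k)" by (simp add: fF_def normalized_iff da_cr0)

lemma AB: "R 3 (fA (Suc k)) = fB k"
  by (simp add: R_def fA_def fB_def numeral_eq_Suc cr_rot)

lemma BA: "R 3 (fB (Suc k)) = fA (Suc k)"
  by (simp add: R_def fA_def fB_def numeral_eq_Suc cr_rot[symmetric])

lemma EF: "R 3 (fE (Suc k)) = fF (Suc k)"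
  by (simp add: R_def fE_def fF_def numeral_eq_Suc cr_rot)

lemma FE: "R 3 (fF (Suc k)) = fE k"
  by (simp add: R_def fE_def fF_def numeral_eq_Suc cr_rot[symmetric])

lemma chainAB: "2 \<le> k \<Longrightarrow> (flip_step ^^ (2*k-1)) (fA k) [0,1,2] \<and> (flip_step ^^ (2*k)) (fB k) [0,1,2]"
proof (induction k rule: dec_induct)
  case base
  have a: "(flip_step ^^ 3) (fA 2) [0,1,2]"
    by (rule reachf_sound) (unfold fA_def cr_def, code_simp)
  have "(flip_step ^^ 4) (fB 2) [0,1,2]"
    by (rule reachf_sound) (unfold fB_def cr_def, code_simp)
  then show ?case using a by simp
next
  case (step k)
  have a: "(flip_step ^^ Suc (2*k)) (fA (Suc k)) [0,1,2]"
    apply (rule stepR[where i=3])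
    using step.IH nA[of "Suc k"] AB[of k] by (auto simp: fA_def numeral_eq_Suc)
  have b: "(flip_step ^^ Suc (2*k+1)) (fB (Suc k)) [0,1,2]"
    apply (rule stepR[where i=3])
    using a nB[of "Suc k"] BA[of k] by (auto simp: fB_def numeral_eq_Suc)
  show ?case using a b by simp
qed

lemma chainEF: "1 \<le> k \<Longrightarrow> (flip_step ^^ (2*k-1)) (fF k) [0,1,2] \<and> (flip_step ^^ (2*k)) (fE k) [0,1,2]"
proof (induction k rule: dec_induct)
  case base
  have a: "(flip_step ^^ 1) (fF 1) [0,1,2]"
    by (rule reachf_sound) (unfold fF_def cr_def, code_simp)
  have "(flip_step ^^ 2) (fE 1) [0,1,2]"
    by (rule reachf_sound) (unfold fE_def cr_def, code_simp)
  then show ?case using a by simp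
next
  case (step k)
  have a: "(flip_step ^^ Suc (2*k)) (fF (Suc k)) [0,1,2]"
    apply (rule stepR[where i=3])
    using step.IH nF[of "Suc k"] FE[of k] by (auto simp: fF_def numeral_eq_Suc)
  have b: "(flip_step ^^ Suc (2*k+1)) (fE (Suc k)) [0,1,2]"
    apply (rule stepR[where i=3])
    using a nE[of "Suc k"] EF[of k] by (auto simp: fE_def numeral_eq_Suc)
  show ?case using a b by simp
qed

lemma famI: "1 \<le> k \<Longrightarrow> (flip_step ^^ (2*k-1)) (0 # cr k [1,2]) [0,1,2]"
proof -
  assume k: "1 \<le> k"
  consider "k = 1" | "k = 2" | "3 \<le> k" using k by linarith
  then show ?thesis
  proof cases
    case 1
    have "(flip_step ^^ 0) (0 # cr k [1,2]) [0,1,2]" using 1 by simp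
    then show ?thesis using pad by blast
  next
    case 2
    show ?thesis unfolding 2 by (rule reachf_sound) (unfold cr_def, code_simp)
  next
    case 3
    then obtain k' where k': "k = Suc k'" "2 \<le> k'" by (cases k) auto
    have "(flip_step ^^ Suc (2*k')) (0 # cr k [1,2]) [0,1,2]"
    proof (rule stepN[where i=2])
      show "normalized (0 # cr k [1, 2])" by (simp add: normalized_iff da_cr0)
      have "rev (take 2 (0 # cr k [1, 2])) @ drop 2 (0 # cr k [1, 2]) = fB k'"
        by (simp add: k' fB_def numeral_eq_Suc cr_rot)
      then show "(flip_step ^^ (2*k')) (rev (take 2 (0 # cr k [1, 2])) @ drop 2 (0 # cr k [1, 2])) [0,1,2]"
        using chainAB[OF k'(2)] by simp
    qed (auto simp: k' numeral_eq_Suc)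
    then show ?thesis using k' by simp
  qed
qed

lemma famII: "2 \<le> k \<Longrightarrow> (flip_step ^^ (2*k)) (0 # 2 # cr k [1,2]) [0,1,2]"
proof -
  assume k: "2 \<le> k"
  then obtain k' where k': "k = Suc k'" by (cases k) auto
  have "(flip_step ^^ Suc (2*k-1)) (0 # 2 # cr k [1,2]) [0,1,2]"
  proof (rule stepN[where i=2])
    show "normalized (0 # 2 # cr k [1, 2])" by (simp add: normalized_iff da_cr0)
    have "rev (take 2 (0 # 2 # cr k [1, 2])) @ drop 2 (0 # 2 # cr k [1, 2]) = fA k"
      by (simp add: fA_def numeral_eq_Suc)
    then show "(flip_step ^^ (2*k-1)) (rev (take 2 (0 # 2 # cr k [1, 2])) @ drop 2 (0 # 2 # cr k [1, 2])) [0,1,2]"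
      using chainAB[OF k] by simp
  qed (auto simp: k' numeral_eq_Suc)
  then show ?thesis using k by simp
qed

lemma famIII: "1 \<le> k \<Longrightarrow> (flip_step ^^ (2*k-1)) (1 # cr k [0,2]) [0,1,2]"
proof -
  assume k: "1 \<le> k"
  then obtain k' where k': "k = Suc k'" by (cases k) auto
  have e: "(flip_step ^^ (2*k')) (fE k') [0,1,2]"
  proof (cases "k' = 0")
    case True then show ?thesis by (simp add: fE_def)
  next
    case False then show ?thesis using chainEF[of k'] by simp
  qed
  have "(flip_step ^^ Suc (2*k')) (1 # cr k [0,2]) [0,1,2]"
  proof (rule stepN[where i=2])
    show "normalized (1 # cr k [0, 2])" by (simp add: normalized_iff da_cr0)
    have "rev (take 2 (1 # cr k [0, 2])) @ drop 2 (1 # cr k [0, 2]) = fE k'"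
      by (simp add: k' fE_def numeral_eq_Suc cr_rot)
    then show "(flip_step ^^ (2*k')) (rev (take 2 (1 # cr k [0, 2])) @ drop 2 (1 # cr k [0, 2])) [0,1,2]"
      using e by simp
  qed (auto simp: k' numeral_eq_Suc)
  then show ?thesis using k' by simp
qed

lemma famIV: "1 \<le> k \<Longrightarrow> (flip_step ^^ (2*k)) (1 # 2 # cr k [0,2]) [0,1,2]"
proof -
  assume k: "1 \<le> k"
  then obtain k' where k': "k = Suc k'" by (cases k) auto
  have "(flip_step ^^ Suc (2*k-1)) (1 # 2 # cr k [0,2]) [0,1,2]"
  proof (rule stepN[where i=2])
    show "normalized (1 # 2 # cr k [0, 2])" by (simp add: normalized_iff da_cr0)
    have "rev (take 2 (1 # 2 # cr k [0, 2])) @ drop 2 (1 # 2 # cr k [0, 2]) = fF k"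
      by (simp add: fF_def numeral_eq_Suc)
    then show "(flip_step ^^ (2*k-1)) (rev (take 2 (1 # 2 # cr k [0, 2])) @ drop 2 (1 # 2 # cr k [0, 2])) [0,1,2]"
      using chainEF[OF k] by simp
  qed (auto simp: k' numeral_eq_Suc)
  then show ?thesis using k by simp
qed

lemma alt_struct:
  "distinct_adj w \<Longrightarrow> set w \<subseteq> {x,2} \<Longrightarrow> x \<noteq> 2 \<Longrightarrow> w \<noteq> [] \<Longrightarrow> last w = 2 \<Longrightarrow>
   (\<exists>k. w = cr k [x,2]) \<or> (\<exists>k. w = 2 # cr k [x,2])"
proof (induction w)
  case Nil then show ?case by simp
next
  case (Cons y w)
  show ?case
  proof (cases "w = []")
    case True then show ?thesis using Cons.prems by (auto intro: exI[of _ 0])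
  next
    case False
    have "distinct_adj w" using Cons.prems(1) by (rule distinct_adj_ConsD)
    then have ih: "(\<exists>k. w = cr k [x,2]) \<or> (\<exists>k. w = 2 # cr k [x,2])"
      using Cons.IH Cons.prems False by auto
    have yh: "y \<noteq> hd w" using Cons.prems(1) False by (simp add: distinct_adj_Cons)
    from ih show ?thesis
    proof
      assume "\<exists>k. w = cr k [x,2]"
      then obtain k where k: "w = cr k [x,2]" by blast
      then have "k \<noteq> 0" using False by (cases k) auto
      then have "hd w = x" using k by (cases k) auto
      then have "y = 2" using yh Cons.prems(2) by auto
      then show ?thesis using k by auto
    next
      assume "\<exists>k. w = 2 # cr k [x,2]"
      then obtain k where k: "w = 2 # cr k [x,2]" by blast
      then have "y = x" using yh Cons.prems(2) by auto
      then have "y # w = cr (Suc k) [x,2]" using k by simp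
      then show ?thesis by blast
    qed
  qed
qed

lemma R_len: "1 \<le> i \<Longrightarrow> i \<le> length s \<Longrightarrow> length (R i s) = length s - 1"
  by (simp add: R_def)

lemma R_set: "1 \<le> i \<Longrightarrow> i < length s \<Longrightarrow> set (R i s) = set (tl s)"
proof -
  have "set (R i s) = set (take (i-1) (tl s)) \<union> set (drop (i-1) (tl s))" by (simp add: R_def)
  also have "\<dots> = set (tl s)" using set_append[of "take (i-1) (tl s)" "drop (i-1) (tl s)"] by simp
  finally show "set (R i s) = set (tl s)" .
qed

lemma R_last: "1 \<le> i \<Longrightarrow> i < length s \<Longrightarrow> last (R i s) = last s"
proof -
  assume a: "1 \<le> i" "i < length s"
  then have ne: "drop (i-1) (tl s) \<noteq> []" by simp
  have "last (R i s) = last (drop (i-1) (tl s))" unfolding R_def using ne by simp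
  also have "\<dots> = last (tl s)" using ne by (simp add: last_drop)
  also have "\<dots> = last s" using a by (cases s) auto
  finally show ?thesis .
qed

lemma R_norm: "normalized s \<Longrightarrow> 1 \<le> i \<Longrightarrow> i < length s \<Longrightarrow> s!i = s!0 \<Longrightarrow> normalized (R i s)"
proof -
  assume a: "normalized s" "1 \<le> i" "i < length s" "s!i = s!0"
  have "flip i s = R i s" using flip_norm[OF a(1,2)] a(3,4) by simp
  moreover have "normalized (flip i s)"
    by (simp add: flip_def normalization_def normalized_iff)
  ultimately show ?thesis by simp
qed

lemma tl_set: "1 \<le> i \<Longrightarrow> i < length s \<Longrightarrow> s!i = s!0 \<Longrightarrow> set (tl s) = set s"
proof -
  assume a: "1 \<le> i" "i < length s" "s!i = s!0"
  obtain a0 s' where s: "s = a0 # s'" using a by (cases s) auto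
  have "s'!(i-1) = a0" using a s by (cases i) auto
  moreover have "i - 1 < length s'" using a s by auto
  ultimately have "a0 \<in> set s'" using nth_mem[of "i-1" s'] by simp
  then show ?thesis using s by auto
qed

lemma R_inv:
  assumes "1 \<le> i" "i < length s" "s!i = s!0"
  shows "s = (R i s)!(i-1) # rev (take (i-1) (R i s)) @ drop (i-1) (R i s)"
proof -
  obtain a0 s' where s: "s = a0 # s'" using assms by (cases s) auto
  have l: "length (rev (take (i-1) s')) = i - 1" using assms s by auto
  have tk: "take (i-1) (R i s) = rev (take (i-1) s')" unfolding R_def s using l by simp
  have dr: "drop (i-1) (R i s) = drop (i-1) s'" unfolding R_def s using l by simp
  have "(R i s)!(i-1) = (drop (i-1) s')!0" unfolding R_def s using l
    by (simp add: nth_append)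
  also have "\<dots> = s'!(i-1)" using assms s by simp
  also have "\<dots> = a0" using assms s by (cases i) auto
  finally show ?thesis using tk dr s by simp
qed

lemma i3: "{0..<3::nat} = {0,1,2}" by (simp add: atLeast0LessThan lessThan_Suc eval_nat_numeral insert_commute)
lemma ft_set: "fully_ternary s \<longleftrightarrow> set s = {0,1,2}"
  by (simp add: fully_ternary_def fully_kary_def i3)
lemma ft_len: "fully_ternary s \<Longrightarrow> 3 \<le> length s"
proof -
  assume "fully_ternary s"
  then have "set s = {0,1,2}" by (simp add: ft_set)
  then have "card (set s) = 3" by simp
  then show ?thesis using card_length[of s] by simp
qed

theorem upper:
  "normalized s \<Longrightarrow> fully_ternary s \<Longrightarrow> last s = 2 \<Longrightarrow> s \<noteq> [0,2,1,2] \<Longrightarrow>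
   (flip_step ^^ (length s - 2)) s [0,1,2]"
proof (induction "length s" arbitrary: s rule: less_induct)
  case less
  have n3: "3 \<le> length s" using ft_len less.prems(2) by blast
  show ?case
  proof (cases "\<exists>i. 1 \<le> i \<and> i < length s \<and> s!i = s!0")
    case True
    then obtain i where i: "1 \<le> i" "i < length s" "s!i = s!0" by blast
    define t where "t = R i s"
    have tl: "length t = length s - 1" unfolding t_def using R_len i by simp
    have tn: "normalized t" unfolding t_def using R_norm less.prems(1) i by blast
    have tf: "fully_ternary t" unfolding t_def ft_set using R_set[OF i(1,2)] tl_set[OF i] less.prems(2)
      by (simp add: ft_set)
    have tla: "last t = 2" unfolding t_def using R_last[OF i(1,2)] less.prems(3) by simp
    have n4: "4 \<le> length s" using ft_len[OF tf] tl by simp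
    show ?thesis
    proof (cases "t = [0,2,1,2]")
      case False
      have "(flip_step ^^ (length t - 2)) t [0,1,2]"
        using less.hyps[of t] tl n3 tn tf tla False by simp
      then have "(flip_step ^^ Suc (length t - 2)) s [0,1,2]"
        using stepR[OF less.prems(1) i] unfolding t_def by blast
      moreover have "Suc (length t - 2) = length s - 2" using tl n4 by simp
      ultimately show ?thesis by simp
    next
      case True
      have s5: "length s = 5" using tl True n3 by simp
      have sinv: "s = t!(i-1) # rev (take (i-1) t) @ drop (i-1) t"
        unfolding t_def using R_inv[OF i] .
      have "i = 1 \<or> i = 2 \<or> i = 3 \<or> i = 4" using i s5 by auto
      then have "s = [0,0,2,1,2] \<or> s = [2,0,2,1,2] \<or> s = [1,2,0,1,2] \<or> s = [2,1,2,0,2]"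
        using sinv True by (auto simp: numeral_eq_Suc)
      moreover have "\<not> normalized [0,0,2,1,2]" by (simp add: normalized_iff)
      moreover have "(flip_step ^^ 3) [2,0,2,1,2] [0,1,2]" by (rule reachf_sound) code_simp
      moreover have "(flip_step ^^ 3) [1,2,0,1,2] [0,1,2]" by (rule reachf_sound) code_simp
      moreover have "(flip_step ^^ 3) [2,1,2,0,2] [0,1,2]" by (rule reachf_sound) code_simp
      ultimately show ?thesis using less.prems(1) s5 by auto
    qed
  next
    case False
    obtain a w where s: "s = a # w" using n3 by (cases s) auto
    have wne: "w \<noteq> []" using n3 s by auto
    have aw: "a \<notin> set w"
    proof
      assume "a \<in> set w"
      then obtain j where j: "j < length w" "w!j = a" by (auto simp: in_set_conv_nth)
      then have "1 \<le> Suc j \<and> Suc j < length s \<and> s!(Suc j) = s!0" using s by simp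
      then show False using False by blast
    qed
    have lw: "last w = 2" using less.prems(3) s wne by simp
    have "2 \<in> set w" using last_in_set[OF wne] lw by simp
    then have a2: "a \<noteq> 2" using aw by auto
    have ss: "set s = {0,1,2}" using less.prems(2) by (simp add: ft_set)
    have "set w = set s - {a}" using aw unfolding s by auto
    then have sw: "set w = {0,1,2} - {a}" using ss by simp
    have dw: "distinct_adj w" using less.prems(1) unfolding s normalized_iff by (rule distinct_adj_ConsD)
    have "a \<in> set s" unfolding s by simp
    then have "a \<in> {0,1,2}" using ss by simp
    then consider "a = 0" | "a = 1" using a2 by auto
    then show ?thesis
    proof cases
      case 1
      then have "set w \<subseteq> {1,2}" using sw by auto
      then have "(\<exists>k. w = cr k [1,2]) \<or> (\<exists>k. w = 2 # cr k [1,2])"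
        using alt_struct[OF dw _ _ wne lw, where x=1] by auto
      then show ?thesis
      proof
        assume "\<exists>k. w = cr k [1,2]"
        then obtain k where k: "w = cr k [1,2]" by blast
        then have "1 \<le> k" using wne by (cases k) auto
        then show ?thesis using famI[of k] s k 1 by (simp add: mult_2)
      next
        assume "\<exists>k. w = 2 # cr k [1,2]"
        then obtain k where k: "w = 2 # cr k [1,2]" by blast
        have "k \<noteq> 0"
        proof
          assume "k = 0"
          then have "set w = {2}" using k by simp
          moreover have "1 \<in> set w" using sw 1 by simp
          ultimately show False by simp
        qed
        moreover have "k \<noteq> 1" using less.prems(4) s k 1 by auto
        ultimately have "2 \<le> k" by simp
        then show ?thesis using famII[of k] s k 1 by (simp add: mult_2)
      qed
    next
      case 2
      then have "set w \<subseteq> {0,2}" using sw by auto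
      then have "(\<exists>k. w = cr k [0,2]) \<or> (\<exists>k. w = 2 # cr k [0,2])"
        using alt_struct[OF dw _ _ wne lw, where x=0] by auto
      then show ?thesis
      proof
        assume "\<exists>k. w = cr k [0,2]"
        then obtain k where k: "w = cr k [0,2]" by blast
        then have "1 \<le> k" using wne by (cases k) auto
        then show ?thesis using famIII[of k] s k 2 by (simp add: mult_2)
      next
        assume "\<exists>k. w = 2 # cr k [0,2]"
        then obtain k where k: "w = 2 # cr k [0,2]" by blast
        have "k \<noteq> 0"
        proof
          assume "k = 0"
          then have "set w = {2}" using k by simp
          moreover have "0 \<in> set w" using sw 2 by simp
          ultimately show False by simp
        qed
        then have "1 \<le> k" by simp
        then show ?thesis using famIV[of k] s k 2 by (simp add: mult_2)
      qed
    qed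
  qed
qed

definition E :: "nat set \<Rightarrow> nat set \<Rightarrow> nat \<Rightarrow> nat set" where
  "E X Y k = (if even k then X else Y)"

definition pos :: "(nat \<Rightarrow> nat set) \<Rightarrow> nat list \<Rightarrow> bool" where
  "pos F s = list_all (\<lambda>k. s ! k \<in> F k) [0..<length s]"

lemma pos_iff: "pos F s \<longleftrightarrow> (\<forall>k<length s. s!k \<in> F k)"
  by (auto simp: pos_def list_all_iff)

lemma pos_Nil[simp]: "pos F []" by (simp add: pos_iff)

lemma pos_Cons[simp]: "pos F (x # xs) \<longleftrightarrow> x \<in> F 0 \<and> pos (\<lambda>k. F (Suc k)) xs"
  by (auto simp: pos_iff nth_Cons split: nat.splits)

lemma pos_append[simp]: "pos F (xs @ ys) \<longleftrightarrow> pos F xs \<and> pos (\<lambda>k. F (length xs + k)) ys"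
proof
  assume a: "pos F (xs @ ys)"
  have "pos F xs" unfolding pos_iff
  proof (intro allI impI)
    fix k assume "k < length xs"
    then show "xs!k \<in> F k" using a[unfolded pos_iff, rule_format, of k] by (simp add: nth_append)
  qed
  moreover have "pos (\<lambda>k. F (length xs + k)) ys" unfolding pos_iff
  proof (intro allI impI)
    fix k assume "k < length ys"
    then show "ys!k \<in> F (length xs + k)" using a[unfolded pos_iff, rule_format, of "length xs + k"] by (simp add: nth_append)
  qed
  ultimately show "pos F xs \<and> pos (\<lambda>k. F (length xs + k)) ys" by simp
next
  assume a: "pos F xs \<and> pos (\<lambda>k. F (length xs + k)) ys"
  show "pos F (xs @ ys)" unfolding pos_iff
  proof (intro allI impI)
    fix k assume k: "k < length (xs @ ys)"
    show "(xs @ ys)!k \<in> F k"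
    proof (cases "k < length xs")
      case True then show ?thesis using a by (simp add: nth_append pos_iff)
    next
      case False
      then have "k - length xs < length ys" using k by simp
      then have "ys!(k - length xs) \<in> F (length xs + (k - length xs))" using a by (simp add: pos_iff)
      then show ?thesis using False by (simp add: nth_append)
    qed
  qed
qed

lemma pos_cong: "(\<And>k. k < length xs \<Longrightarrow> F k = G k) \<Longrightarrow> pos F xs = pos G xs"
  by (auto simp: pos_iff)

lemma pos_mono: "pos F xs \<Longrightarrow> (\<And>k. k < length xs \<Longrightarrow> F k \<subseteq> G k) \<Longrightarrow> pos G xs"
  by (auto simp: pos_iff)

lemma posD: "pos F xs \<Longrightarrow> k < length xs \<Longrightarrow> xs!k \<in> F k"
  by (auto simp: pos_iff)

lemma E_Suc[simp]: "E X Y (Suc k) = E Y X k" by (simp add: E_def)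
lemma E_0[simp]: "E X Y 0 = X" by (simp add: E_def)

definition L2 :: "nat set \<Rightarrow> nat set \<Rightarrow> nat list set" where
  "L2 X Y = {[x,y] | x y. x \<in> X \<and> y \<in> Y}"

lemma concat_L2:
  "set ws \<subseteq> L2 X Y \<Longrightarrow> length (concat ws) = 2 * length ws \<and> pos (E X Y) (concat ws)"
proof (induction ws)
  case Nil then show ?case by simp
next
  case (Cons w ws)
  then obtain x y where w: "w = [x,y]" "x \<in> X" "y \<in> Y" by (auto simp: L2_def)
  have "pos (\<lambda>k. E X Y (Suc (Suc k))) (concat ws) = pos (E X Y) (concat ws)"
    by (rule pos_cong) (simp add: E_def)
  then show ?case using Cons w by (simp add: E_def)
qed

lemma L2_concat:
  "even (length w) \<Longrightarrow> pos (E X Y) w \<Longrightarrow> \<exists>ws. w = concat ws \<and> set ws \<subseteq> L2 X Y \<and> length ws = length w div 2"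
proof (induction w rule: induct_list012)
  case 1 then show ?case by simp
next
  case (2 x) then show ?case by simp
next
  case (3 x y zs)
  have "pos (\<lambda>k. E X Y (Suc (Suc k))) zs = pos (E X Y) zs"
    by (rule pos_cong) (simp add: E_def)
  then have "pos (E X Y) zs" using "3.prems" by simp
  then obtain ws where ws: "zs = concat ws" "set ws \<subseteq> L2 X Y" "length ws = length zs div 2"
    using "3.IH"(1) "3.prems" by auto
  have "[x,y] \<in> L2 X Y" using "3.prems" by (auto simp: L2_def E_def)
  then show ?case using ws
    by (intro exI[of _ "[x,y] # ws"]) auto
qed

lemma reps_L2:
  "w \<in> reps (L2 X Y) m \<longleftrightarrow> even (length w) \<and> 2 * m \<le> length w \<and> pos (E X Y) w"
proof
  assume "w \<in> reps (L2 X Y) m"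
  then obtain ws where "w = concat ws" "set ws \<subseteq> L2 X Y" "m \<le> length ws" by (auto simp: reps_def)
  then show "even (length w) \<and> 2 * m \<le> length w \<and> pos (E X Y) w"
    using concat_L2 by auto
next
  assume a: "even (length w) \<and> 2 * m \<le> length w \<and> pos (E X Y) w"
  then obtain ws where "w = concat ws" "set ws \<subseteq> L2 X Y" "length ws = length w div 2"
    using L2_concat by blast
  then show "w \<in> reps (L2 X Y) m" using a by (auto simp: reps_def)
qed

lemma L2_02_12: "{[0,2],[1,2]} = L2 {0,1} {2}" by (auto simp: L2_def)
lemma L2_10_20: "{[1,0],[2,0]} = L2 {1,2} {0}" by (auto simp: L2_def)
lemma L2_01_02: "{[0,1],[0,2]} = L2 {0} {1,2}" by (auto simp: L2_def)
lemma L2_single: "{[a,b]} = L2 {a} {b}" by (auto simp: L2_def)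

lemma pos_split:
  assumes "pos F s" "length s = a + 1 + b"
  shows "\<exists>xs y ys. s = xs @ y # ys \<and> length xs = a \<and> length ys = b \<and> pos F xs \<and> y \<in> F a \<and>
     pos (\<lambda>k. F (a + 1 + k)) ys"
proof (intro exI conjI)
  show "s = take a s @ s!a # drop (Suc a) s" using assms(2) by (simp add: id_take_nth_drop)
  have p: "pos F (take a s @ s!a # drop (Suc a) s)" using assms(1) \<open>s = _\<close> by simp
  show "pos F (take a s)" using p by simp
  show "s!a \<in> F a" using p assms(2) by simp
  show "pos (\<lambda>k. F (a + 1 + k)) (drop (Suc a) s)" using p assms(2) by (simp add: min_def)
qed (use assms(2) in auto)

definition FI :: "nat \<Rightarrow> nat set" where "FI k = (if k = 0 then {0} else E {2} {1} k)"

lemma typeI_pos: "typeI s \<longleftrightarrow> odd (length s) \<and> 5 \<le> length s \<and> pos FI s"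
proof
  assume "typeI s"
  then obtain w where w: "s = 0 # w" "even (length w)" "4 \<le> length w" "pos (E {1} {2}) w"
    by (auto simp: typeI_def L2_single reps_L2)
  have "pos (\<lambda>k. FI (Suc k)) w = pos (E {1} {2}) w" by (rule pos_cong) (simp add: FI_def)
  then show "odd (length s) \<and> 5 \<le> length s \<and> pos FI s" using w by (simp add: FI_def)
next
  assume a: "odd (length s) \<and> 5 \<le> length s \<and> pos FI s"
  then obtain x w where s: "s = x # w" by (cases s) auto
  have "pos (\<lambda>k. FI (Suc k)) w = pos (E {1} {2}) w" by (rule pos_cong) (simp add: FI_def)
  then have "x = 0" "pos (E {1} {2}) w" using a s by (auto simp: FI_def)
  then show "typeI s" using a s by (auto simp: typeI_def L2_single reps_L2)
qed

definition "PIIa s \<longleftrightarrow> even (length s) \<and> 2 \<le> length s \<and> pos (E {0,1} {2}) s"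
definition "PIIb s \<longleftrightarrow> odd (length s) \<and> 3 \<le> length s \<and> pos (E {2} {0,1}) s"

lemma typeII_pos: "typeII s \<longleftrightarrow> PIIa s \<or> PIIb s"
proof
  assume "typeII s"
  then obtain w where w: "s = w \<or> s = 2 # w" "even (length w)" "2 \<le> length w" "pos (E {0,1} {2}) w"
    unfolding typeII_def L2_02_12 Bex_def reps_L2 by auto
  have "pos (\<lambda>k. E {2} {0,1} (Suc k)) w = pos (E {0,1} {2}) w" by (rule pos_cong) simp
  then show "PIIa s \<or> PIIb s" using w by (auto simp: PIIa_def PIIb_def)
next
  assume "PIIa s \<or> PIIb s"
  then show "typeII s"
  proof
    assume "PIIa s" then show ?thesis unfolding PIIa_def typeII_def L2_02_12 Bex_def reps_L2 by auto
  next
    assume a: "PIIb s"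
    then obtain x w where s: "s = x # w" by (cases s) (auto simp: PIIb_def)
    have "pos (\<lambda>k. E {2} {0,1} (Suc k)) w = pos (E {0,1} {2}) w" by (rule pos_cong) simp
    then have "x = 2" "pos (E {0,1} {2}) w" "even (length w)" "2 \<le> length w"
      using a s by (auto simp: PIIb_def E_def)
    then show ?thesis using s unfolding typeII_def L2_02_12 Bex_def reps_L2 by auto
  qed
qed

definition "FIIIa n k = (if k + 1 = n then {2} else E {1,2} {0} k)"
definition "FIIIb n k = (if k + 1 = n then {2} else E {0} {1,2} k)"
definition "PIIIa s \<longleftrightarrow> odd (length s) \<and> 3 \<le> length s \<and> pos (FIIIa (length s)) s"
definition "PIIIb s \<longleftrightarrow> even (length s) \<and> 4 \<le> length s \<and> pos (FIIIb (length s)) s"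

lemma typeIII_pos: "typeIII s \<longleftrightarrow> PIIIa s \<or> PIIIb s"
proof
  assume "typeIII s"
  then obtain w where w: "s = w @ [2] \<or> s = 0 # w @ [2]" "even (length w)" "2 \<le> length w" "pos (E {1,2} {0}) w"
    unfolding typeIII_def L2_10_20 Bex_def reps_L2 by auto
  show "PIIIa s \<or> PIIIb s"
  proof (cases "s = w @ [2]")
    case True
    have "pos (FIIIa (length w + 1)) w = pos (E {1,2} {0}) w" by (rule pos_cong) (simp add: FIIIa_def)
    then have "PIIIa s" using w True by (simp add: PIIIa_def FIIIa_def)
    then show ?thesis by simp
  next
    case False
    then have s: "s = 0 # w @ [2]" using w by simp
    have "pos (\<lambda>k. FIIIb (length w + 2) (Suc k)) w = pos (E {1,2} {0}) w" by (rule pos_cong) (simp add: FIIIb_def)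
    then have "PIIIb s" using w s by (simp add: PIIIb_def FIIIb_def)
    then show ?thesis by simp
  qed
next
  assume "PIIIa s \<or> PIIIb s"
  then show "typeIII s"
  proof
    assume a: "PIIIa s"
    obtain q where qn: "length s = q + 1" using a unfolding PIIIa_def by (intro that[of "length s - 1"]) simp
    have q: "length s = q + 1 + 0" "odd (q + 1)" "2 \<le> q" "pos (FIIIa (q + 1)) s" using a qn unfolding PIIIa_def by auto
    from pos_split[OF q(4) q(1)] obtain xs y ys where d: "s = xs @ y # ys" "length xs = q" "length ys = 0"
      "pos (FIIIa (q + 1)) xs" "y \<in> FIIIa (q + 1) q" by blast
    have "pos (FIIIa (q + 1)) xs = pos (E {1,2} {0}) xs" by (rule pos_cong) (use d(2) in \<open>auto simp: FIIIa_def\<close>)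
    then have p: "pos (E {1,2} {0}) xs" using d(4) by simp
    have "y = 2" "ys = []" using d(3,5) by (auto simp: FIIIa_def)
    then have "s = xs @ [2]" using d(1) by simp
    moreover have "even (length xs)" "2 \<le> length xs" using d(2) q(2,3) by auto
    ultimately show ?thesis using p unfolding typeIII_def L2_10_20 Bex_def reps_L2 by auto
  next
    assume a: "PIIIb s"
    obtain q where qn: "length s = q + 2" using a unfolding PIIIb_def by (intro that[of "length s - 2"]) auto
    have q: "length s = 0 + 1 + (q + 1)" "even (q + 2)" "2 \<le> q" "pos (FIIIb (q + 2)) s" using a qn unfolding PIIIb_def by auto
    from pos_split[OF q(4) q(1)] obtain xs0 y0 s1 where d0: "s = xs0 @ y0 # s1" "length xs0 = 0"
      "length s1 = q + 1" "y0 \<in> FIIIb (q + 2) 0" "pos (\<lambda>k. FIIIb (q + 2) (0 + 1 + k)) s1" by blast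
    have "length s1 = q + 1 + 0" using d0(3) by simp
    from pos_split[OF d0(5) this] obtain xs y ys where d: "s1 = xs @ y # ys" "length xs = q" "length ys = 0"
      "pos (\<lambda>k. FIIIb (q + 2) (0 + 1 + k)) xs" "y \<in> FIIIb (q + 2) (0 + 1 + q)" by blast
    have "pos (\<lambda>k. FIIIb (q + 2) (0 + 1 + k)) xs = pos (E {1,2} {0}) xs"
      by (rule pos_cong) (use d(2) in \<open>auto simp: FIIIb_def\<close>)
    then have p: "pos (E {1,2} {0}) xs" using d(4) by simp
    have "y = 2" "ys = []" using d(3) d(5) by (auto simp: FIIIb_def)
    moreover have "y0 = 0" "xs0 = []" using d0(2,4) by (auto simp: FIIIb_def)
    ultimately have "s = 0 # xs @ [2]" using d0(1) d(1) by simp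
    moreover have "even (length xs)" "2 \<le> length xs" using d(2) q(2,3) by auto
    ultimately show ?thesis using p unfolding typeIII_def L2_10_20 Bex_def reps_L2 by auto
  qed
qed

definition "FIVa n k = (if k + 1 = n then {2} else if k + 2 = n then {1} else E {1,2} {0} k)"
definition "FIVb n k = (if k + 1 = n then {2} else if k + 2 = n then {1} else E {0} {1,2} k)"
definition "PIVa s \<longleftrightarrow> 2 \<le> count2 s \<and> even (length s) \<and> 4 \<le> length s \<and> pos (FIVa (length s)) s"
definition "PIVb s \<longleftrightarrow> 2 \<le> count2 s \<and> odd (length s) \<and> 5 \<le> length s \<and> pos (FIVb (length s)) s"

lemma typeIV_pos: "typeIV s \<longleftrightarrow> PIVa s \<or> PIVb s"
proof
  assume "typeIV s"
  then have c: "2 \<le> count2 s" and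
    "(\<exists>w. (even (length w) \<and> 2 \<le> length w \<and> pos (E {1,2} {0}) w) \<and> s = w @ [1,2]) \<or>
     (\<exists>w. (even (length w) \<and> 2 \<le> length w \<and> pos (E {0} {1,2}) w) \<and> s = w @ [0,1,2])"
    unfolding typeIV_def L2_10_20 L2_01_02 Bex_def reps_L2 by auto
  then show "PIVa s \<or> PIVb s"
  proof (elim disjE exE conjE)
    fix w assume w: "even (length w)" "2 \<le> length w" "pos (E {1,2} {0}) w" "s = w @ [1,2]"
    have "pos (FIVa (length w + 2)) w = pos (E {1,2} {0}) w" by (rule pos_cong) (auto simp: FIVa_def)
    then have "PIVa s" using w c by (simp add: PIVa_def FIVa_def)
    then show ?thesis by simp
  next
    fix w assume w: "even (length w)" "2 \<le> length w" "pos (E {0} {1,2}) w" "s = w @ [0,1,2]"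
    have "pos (FIVb (Suc (Suc (Suc (length w))))) w = pos (E {0} {1,2}) w" by (rule pos_cong) (auto simp: FIVb_def)
    then have "PIVb s" using w c by (simp add: PIVb_def FIVb_def E_def)
    then show ?thesis by simp
  qed
next
  assume "PIVa s \<or> PIVb s"
  then show "typeIV s"
  proof
    assume a: "PIVa s"
    obtain q where qn: "length s = q + 2" using a unfolding PIVa_def by (intro that[of "length s - 2"]) auto
    have q: "length s = q + 1 + 1" "even q" "2 \<le> q" "pos (FIVa (q + 2)) s" "2 \<le> count2 s"
      using a qn unfolding PIVa_def by auto
    from pos_split[OF q(4) q(1)] obtain xs y ys where d: "s = xs @ y # ys" "length xs = q" "length ys = 1"
      "pos (FIVa (q + 2)) xs" "y \<in> FIVa (q + 2) q" "pos (\<lambda>k. FIVa (q + 2) (q + 1 + k)) ys" by blast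
    have "pos (FIVa (q + 2)) xs = pos (E {1,2} {0}) xs" by (rule pos_cong) (use d(2) in \<open>auto simp: FIVa_def\<close>)
    then have p: "pos (E {1,2} {0}) xs" using d(4) by simp
    obtain z where z: "ys = [z]" using d(3) by (cases ys) auto
    have "z = 2" using d(6)[unfolded z] by (auto simp: FIVa_def)
    moreover have "y = 1" using d(5) by (auto simp: FIVa_def)
    ultimately have "s = xs @ [1,2]" using d(1) z by simp
    moreover have "even (length xs)" "2 \<le> length xs" using d(2) q(2,3) by auto
    ultimately show ?thesis using p q(5) unfolding typeIV_def L2_10_20 Bex_def reps_L2 by auto
  next
    assume a: "PIVb s"
    obtain q where qn: "length s = q + 3" using a unfolding PIVb_def by (intro that[of "length s - 3"]) auto
    have q: "length s = q + 1 + 2" "even q" "2 \<le> q" "pos (FIVb (q + 3)) s" "2 \<le> count2 s"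
      using a qn unfolding PIVb_def by auto
    from pos_split[OF q(4) q(1)] obtain xs y ys where d: "s = xs @ y # ys" "length xs = q" "length ys = 2"
      "pos (FIVb (q + 3)) xs" "y \<in> FIVb (q + 3) q" "pos (\<lambda>k. FIVb (q + 3) (q + 1 + k)) ys" by blast
    have "pos (FIVb (q + 3)) xs = pos (E {0} {1,2}) xs" by (rule pos_cong) (use d(2) in \<open>auto simp: FIVb_def\<close>)
    then have p: "pos (E {0} {1,2}) xs" using d(4) by simp
    obtain z1 z2 where z: "ys = [z1, z2]" using d(3) by (cases ys; cases "tl ys") auto
    have zz: "z1 = 1" "z2 = 2" using d(6)[unfolded z] by (auto simp: FIVb_def)
    have "y = 0" using d(5) q(2) by (auto simp: FIVb_def E_def)
    then have "s = xs @ [0,1,2]" using d(1) z zz by simp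
    moreover have "even (length xs)" "2 \<le> length xs" using d(2) q(2,3) by auto
    ultimately show ?thesis using p q(5) unfolding typeIV_def L2_01_02 Bex_def reps_L2 by auto
  qed
qed

definition "FVa n k = (if k + 1 = n then {2} else if k + 2 = n then {1} else if k + 3 = n then {2} else E {0} {1} k)"
definition "FVb n k = (if k + 1 = n then {2} else if k + 2 = n then {1} else if k + 3 = n then {2} else E {1} {0} k)"
definition "PVa s \<longleftrightarrow> even (length s) \<and> 4 \<le> length s \<and> pos (FVa (length s)) s"
definition "PVb s \<longleftrightarrow> odd (length s) \<and> 5 \<le> length s \<and> pos (FVb (length s)) s"

lemma typeV_pos: "typeV s \<longleftrightarrow> PVa s \<or> PVb s"
proof
  assume "typeV s"
  then have
    "(\<exists>w. (even (length w) \<and> 0 \<le> length w \<and> pos (E {0} {1}) w) \<and> s = w @ [0,2,1,2]) \<or>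
     (\<exists>w. (even (length w) \<and> 2 \<le> length w \<and> pos (E {1} {0}) w) \<and> s = w @ [2,1,2])"
    unfolding typeV_def L2_single Bex_def reps_L2 by auto
  then show "PVa s \<or> PVb s"
  proof (elim disjE exE conjE)
    fix w assume w: "even (length w)" "pos (E {0} {1}) w" "s = w @ [0,2,1,2]"
    have "pos (FVa (Suc (Suc (Suc (Suc (length w)))))) w = pos (E {0} {1}) w" by (rule pos_cong) (auto simp: FVa_def)
    then have "PVa s" using w by (simp add: PVa_def FVa_def E_def)
    then show ?thesis by simp
  next
    fix w assume w: "even (length w)" "2 \<le> length w" "pos (E {1} {0}) w" "s = w @ [2,1,2]"
    have "pos (FVb (Suc (Suc (Suc (length w))))) w = pos (E {1} {0}) w" by (rule pos_cong) (auto simp: FVb_def)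
    then have "PVb s" using w by (simp add: PVb_def FVb_def)
    then show ?thesis by simp
  qed
next
  assume "PVa s \<or> PVb s"
  then show "typeV s"
  proof
    assume a: "PVa s"
    obtain q where qn: "length s = q + 4" using a unfolding PVa_def by (intro that[of "length s - 4"]) auto
    have q: "length s = q + 1 + 3" "even q" "pos (FVa (q + 4)) s"
      using a qn unfolding PVa_def by auto
    from pos_split[OF q(3) q(1)] obtain xs y ys where d: "s = xs @ y # ys" "length xs = q" "length ys = 3"
      "pos (FVa (q + 4)) xs" "y \<in> FVa (q + 4) q" "pos (\<lambda>k. FVa (q + 4) (q + 1 + k)) ys" by blast
    have "pos (FVa (q + 4)) xs = pos (E {0} {1}) xs" by (rule pos_cong) (use d(2) in \<open>auto simp: FVa_def\<close>)
    then have p: "pos (E {0} {1}) xs" using d(4) by simp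
    obtain z1 z2 z3 where z: "ys = [z1, z2, z3]" using d(3)
      by (cases ys; cases "tl ys"; cases "tl (tl ys)") auto
    have zz: "z1 = 2" "z2 = 1" "z3 = 2" using d(6)[unfolded z] by (auto simp: FVa_def)
    have "y = 0" using d(5) q(2) by (auto simp: FVa_def E_def)
    then have "s = xs @ [0,2,1,2]" using d(1) z zz by simp
    moreover have "even (length xs)" using d(2) q(2) by auto
    ultimately show ?thesis using p unfolding typeV_def L2_single Bex_def reps_L2 by auto
  next
    assume a: "PVb s"
    obtain q where qn: "length s = q + 3" using a unfolding PVb_def by (intro that[of "length s - 3"]) auto
    have q: "length s = q + 1 + 2" "even q" "2 \<le> q" "pos (FVb (q + 3)) s"
      using a qn unfolding PVb_def by auto
    from pos_split[OF q(4) q(1)] obtain xs y ys where d: "s = xs @ y # ys" "length xs = q" "length ys = 2"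
      "pos (FVb (q + 3)) xs" "y \<in> FVb (q + 3) q" "pos (\<lambda>k. FVb (q + 3) (q + 1 + k)) ys" by blast
    have "pos (FVb (q + 3)) xs = pos (E {1} {0}) xs" by (rule pos_cong) (use d(2) in \<open>auto simp: FVb_def\<close>)
    then have p: "pos (E {1} {0}) xs" using d(4) by simp
    obtain z1 z2 where z: "ys = [z1, z2]" using d(3) by (cases ys; cases "tl ys") auto
    have zz: "z1 = 1" "z2 = 2" using d(6)[unfolded z] by (auto simp: FVb_def)
    have "y = 2" using d(5) by (auto simp: FVb_def)
    then have "s = xs @ [2,1,2]" using d(1) z zz by simp
    moreover have "even (length xs)" "2 \<le> length xs" using d(2) q(2,3) by auto
    ultimately show ?thesis using p unfolding typeV_def L2_single Bex_def reps_L2 by auto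
  qed
qed

definition "FVIII n k = (if k = 0 \<or> k + 2 = n then {1} else if k + 1 = n then {2} else E {2} {0} k)"
definition "PVIII s \<longleftrightarrow> odd (length s) \<and> 5 \<le> length s \<and> pos (FVIII (length s)) s"

lemma typeVIII_pos: "typeVIII s \<longleftrightarrow> PVIII s"
proof
  assume "typeVIII s"
  then obtain w where w: "even (length w)" "2 \<le> length w" "pos (E {0} {2}) w" "s = 1 # w @ [1,2]"
    unfolding typeVIII_def L2_single Bex_def reps_L2 by auto
  have "pos (\<lambda>k. FVIII (Suc (Suc (Suc (length w)))) (Suc k)) w = pos (E {0} {2}) w"
    by (rule pos_cong) (auto simp: FVIII_def)
  then show "PVIII s" using w by (simp add: PVIII_def FVIII_def)
next
  assume a: "PVIII s"
  obtain q where qn: "length s = q + 3" using a unfolding PVIII_def by (intro that[of "length s - 3"]) auto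
  have q: "length s = 0 + 1 + (q + 2)" "even q" "2 \<le> q" "pos (FVIII (q + 3)) s"
    using a qn unfolding PVIII_def by auto
  from pos_split[OF q(4) q(1)] obtain xs0 y0 s1 where d0: "s = xs0 @ y0 # s1" "length xs0 = 0"
    "length s1 = q + 2" "y0 \<in> FVIII (q + 3) 0" "pos (\<lambda>k. FVIII (q + 3) (0 + 1 + k)) s1" by blast
  have "length s1 = q + 1 + 1" using d0(3) by simp
  from pos_split[OF d0(5) this] obtain xs y ys where d: "s1 = xs @ y # ys" "length xs = q" "length ys = 1"
    "pos (\<lambda>k. FVIII (q + 3) (0 + 1 + k)) xs" "y \<in> FVIII (q + 3) (0 + 1 + q)"
    "pos (\<lambda>k. FVIII (q + 3) (0 + 1 + (q + 1 + k))) ys" by blast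
  have "pos (\<lambda>k. FVIII (q + 3) (0 + 1 + k)) xs = pos (E {0} {2}) xs"
    by (rule pos_cong) (use d(2) in \<open>auto simp: FVIII_def\<close>)
  then have p: "pos (E {0} {2}) xs" using d(4) by simp
  obtain z where z: "ys = [z]" using d(3) by (cases ys) auto
  have "z = 2" using d(6)[unfolded z] by (auto simp: FVIII_def)
  moreover have "y = 1" using d(5) by (auto simp: FVIII_def)
  moreover have "y0 = 1" "xs0 = []" using d0(2,4) by (auto simp: FVIII_def)
  ultimately have "s = 1 # xs @ [1,2]" using d0(1) d(1) z by simp
  moreover have "even (length xs)" "2 \<le> length xs" using d(2) q(2,3) by auto
  ultimately show "typeVIII s" using p unfolding typeVIII_def L2_single Bex_def reps_L2 by auto
qed

definition "FVI a b m k = (if k = 0 \<or> k = m then {a} else if k < m then E {b} {2} k else E {2} {b} k)"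
definition "PVI a b s \<longleftrightarrow> (\<exists>m. odd m \<and> 3 \<le> m \<and> odd (length s) \<and> m + 2 \<le> length s \<and> pos (FVI a b m) s)"

lemma typeVI_half:
  assumes "b \<noteq> 2"
  shows "(\<exists>w. (even (length w) \<and> 2 \<le> length w \<and> pos (E {2} {b}) w) \<and>
          (\<exists>v. (even (length v) \<and> pos (E {2} {b}) v) \<and> s = [a] @ w @ [a] @ v @ [2]))
        \<longleftrightarrow> PVI a b s"
proof
  assume "\<exists>w. (even (length w) \<and> 2 \<le> length w \<and> pos (E {2} {b}) w) \<and>
          (\<exists>v. (even (length v) \<and> pos (E {2} {b}) v) \<and> s = [a] @ w @ [a] @ v @ [2])"
  then obtain w v where w: "even (length w)" "2 \<le> length w" "pos (E {2} {b}) w"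
    "even (length v)" "pos (E {2} {b}) v" "s = a # w @ a # v @ [2]" by auto
  define m where "m = Suc (length w)"
  have c1: "pos (\<lambda>k. FVI a b m (Suc k)) w = pos (E {2} {b}) w"
    by (rule pos_cong) (auto simp: FVI_def m_def)
  have c2: "pos (\<lambda>k. FVI a b m (Suc (length w + Suc k))) v = pos (E {2} {b}) v"
    by (rule pos_cong) (use w(1) in \<open>auto simp: FVI_def m_def E_def\<close>)
  have l: "2 \<in> FVI a b m (Suc (length w + Suc (length v)))" using w(1,4) by (auto simp: FVI_def m_def E_def)
  have "pos (FVI a b m) s" using w c1 c2 l by (simp add: FVI_def m_def)
  moreover have "odd m" "3 \<le> m" "odd (length s)" "m + 2 \<le> length s" using w by (auto simp: m_def)
  ultimately show "PVI a b s" unfolding PVI_def by blast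
next
  assume "PVI a b s"
  then obtain m where a': "odd m" "3 \<le> m" "odd (length s)" "m + 2 \<le> length s" "pos (FVI a b m) s"
    unfolding PVI_def by blast
  define n where "n = length s"
  have a'': "odd n" "m + 2 \<le> n" using a' n_def by auto
  have "length s = 0 + 1 + (n - 1)" using a'' n_def by simp
  from pos_split[OF a'(5) this] obtain xs0 y0 s1 where d0: "s = xs0 @ y0 # s1" "length xs0 = 0"
    "length s1 = n - 1" "y0 \<in> FVI a b m 0" "pos (\<lambda>k. FVI a b m (0 + 1 + k)) s1" by blast
  have "length s1 = (m - 1) + 1 + (n - m - 1)" using d0(3) a'' a'(2) by simp
  from pos_split[OF d0(5) this] obtain w y1 s2 where d1: "s1 = w @ y1 # s2" "length w = m - 1"
    "length s2 = n - m - 1" "pos (\<lambda>k. FVI a b m (0 + 1 + k)) w" "y1 \<in> FVI a b m (0 + 1 + (m - 1))"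
    "pos (\<lambda>k. FVI a b m (0 + 1 + (m - 1 + 1 + k))) s2" by blast
  have "length s2 = (n - m - 2) + 1 + 0" using d1(3) a'' by simp
  from pos_split[OF d1(6) this] obtain v y2 ys where d2: "s2 = v @ y2 # ys" "length v = n - m - 2"
    "length ys = 0" "pos (\<lambda>k. FVI a b m (0 + 1 + (m - 1 + 1 + k))) v"
    "y2 \<in> FVI a b m (0 + 1 + (m - 1 + 1 + (n - m - 2)))" by blast
  have e: "0 + 1 + (m - 1) = m" "0 + 1 + (m - 1 + 1 + (n - m - 2)) = n - 1" using a'' a'(2) by auto
  have cw: "pos (\<lambda>k. FVI a b m (0 + 1 + k)) w = pos (E {2} {b}) w"
    by (rule pos_cong) (use d1(2) in \<open>auto simp: FVI_def\<close>)
  have cv: "pos (\<lambda>k. FVI a b m (0 + 1 + (m - 1 + 1 + k))) v = pos (E {2} {b}) v"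
    by (rule pos_cong) (use a'(1,2) in \<open>auto simp: FVI_def E_def\<close>)
  have ev: "even (n - 1)" "n - 1 \<noteq> 0" "n - 1 \<noteq> m" "\<not> n - 1 < m" using a'' a'(2) by auto
  have "y2 = 2" using d2(5)[unfolded e] ev by (auto simp: FVI_def E_def)
  moreover have "y1 = a" using d1(5)[unfolded e] by (auto simp: FVI_def)
  moreover have "y0 = a" "xs0 = []" "ys = []" using d0(2,4) d2(3) by (auto simp: FVI_def)
  ultimately have "s = [a] @ w @ [a] @ v @ [2]" using d0(1) d1(1) d2(1) by simp
  moreover have "even (length w)" "2 \<le> length w" using d1(2) a'(1,2) by (auto elim: oddE)
  moreover have "even (length v)" using d2(2) a'(1) a''(1) by presburger
  ultimately show "\<exists>w. (even (length w) \<and> 2 \<le> length w \<and> pos (E {2} {b}) w) \<and>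
          (\<exists>v. (even (length v) \<and> pos (E {2} {b}) v) \<and> s = [a] @ w @ [a] @ v @ [2])"
    using cw cv d1(4) d2(4) by blast
qed

lemma typeVI_pos: "typeVI s \<longleftrightarrow> PVI 1 0 s \<or> PVI 0 1 s"
proof -
  have "typeVI s \<longleftrightarrow>
    (\<exists>w. (even (length w) \<and> 2 \<le> length w \<and> pos (E {2} {0}) w) \<and>
          (\<exists>v. (even (length v) \<and> pos (E {2} {0}) v) \<and> s = [1] @ w @ [1] @ v @ [2])) \<or>
    (\<exists>w. (even (length w) \<and> 2 \<le> length w \<and> pos (E {2} {1}) w) \<and>
          (\<exists>v. (even (length v) \<and> pos (E {2} {1}) v) \<and> s = [0] @ w @ [0] @ v @ [2]))"
    unfolding typeVI_def L2_single Bex_def reps_L2 by simp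
  then show ?thesis using typeVI_half[of 0 s 1] typeVI_half[of 1 s 0] by simp
qed

definition "FVII m k = (if k = 0 \<or> k = m then {1} else if k < m then E {2} {0} k else E {0} {2} k)"
definition "PVII s \<longleftrightarrow> (\<exists>m. odd m \<and> 3 \<le> m \<and> even (length s) \<and> m + 3 \<le> length s \<and> pos (FVII m) s)"

lemma typeVII_pos: "typeVII s \<longleftrightarrow> PVII s"
proof
  assume "typeVII s"
  then obtain w v where w: "even (length w)" "2 \<le> length w" "pos (E {0} {2}) w"
    "even (length v)" "2 \<le> length v" "pos (E {0} {2}) v" "s = 1 # w @ 1 # v"
    unfolding typeVII_def L2_single Bex_def reps_L2 by auto
  define m where "m = Suc (length w)"
  have c1: "pos (\<lambda>k. FVII m (Suc k)) w = pos (E {0} {2}) w"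
    by (rule pos_cong) (auto simp: FVII_def m_def)
  have c2: "pos (\<lambda>k. FVII m (Suc (length w + Suc k))) v = pos (E {0} {2}) v"
    by (rule pos_cong) (use w(1) in \<open>auto simp: FVII_def m_def E_def\<close>)
  have "pos (FVII m) s" using w c1 c2 by (simp add: FVII_def m_def)
  moreover have "odd m" "3 \<le> m" "even (length s)" "m + 3 \<le> length s" using w by (auto simp: m_def)
  ultimately show "PVII s" unfolding PVII_def by blast
next
  assume "PVII s"
  then obtain m where a': "odd m" "3 \<le> m" "even (length s)" "m + 3 \<le> length s" "pos (FVII m) s"
    unfolding PVII_def by blast
  define n where "n = length s"
  have a'': "even n" "m + 3 \<le> n" using a' n_def by auto
  have "length s = 0 + 1 + (n - 1)" using a'' n_def by simp
  from pos_split[OF a'(5) this] obtain xs0 y0 s1 where d0: "s = xs0 @ y0 # s1" "length xs0 = 0"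
    "length s1 = n - 1" "y0 \<in> FVII m 0" "pos (\<lambda>k. FVII m (0 + 1 + k)) s1" by blast
  have "length s1 = (m - 1) + 1 + (n - m - 1)" using d0(3) a'' a'(2) by simp
  from pos_split[OF d0(5) this] obtain w y1 v where d1: "s1 = w @ y1 # v" "length w = m - 1"
    "length v = n - m - 1" "pos (\<lambda>k. FVII m (0 + 1 + k)) w" "y1 \<in> FVII m (0 + 1 + (m - 1))"
    "pos (\<lambda>k. FVII m (0 + 1 + (m - 1 + 1 + k))) v" by blast
  have e: "0 + 1 + (m - 1) = m" using a'(2) by auto
  have cw: "pos (\<lambda>k. FVII m (0 + 1 + k)) w = pos (E {0} {2}) w"
    by (rule pos_cong) (use d1(2) in \<open>auto simp: FVII_def\<close>)
  have cv: "pos (\<lambda>k. FVII m (0 + 1 + (m - 1 + 1 + k))) v = pos (E {0} {2}) v"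
    by (rule pos_cong) (use a'(1,2) in \<open>auto simp: FVII_def E_def\<close>)
  have "y1 = 1" using d1(5)[unfolded e] by (auto simp: FVII_def)
  moreover have "y0 = 1" "xs0 = []" using d0(2,4) by (auto simp: FVII_def)
  ultimately have "s = [1] @ w @ [1] @ v" using d0(1) d1(1) by simp
  moreover have "even (length w)" "2 \<le> length w" using d1(2) a'(1,2) by (auto elim: oddE)
  moreover have "even (length v)" using d1(3) a'(1) a''(1) by presburger
  moreover have "2 \<le> length v" using d1(3) a''(2) by simp
  ultimately show "typeVII s" using cw cv d1(4,6)
    unfolding typeVII_def L2_single Bex_def reps_L2 by auto
qed

lemma R_nth:
  assumes "1 \<le> i" "i < length s" "k < length s - 1"
  shows "R i s ! k = s ! (if k < i - 1 then i - 1 - k else k + 1)"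
proof -
  obtain a s' where s: "s = a # s'" using assms by (cases s) auto
  show ?thesis
  proof (cases "k < i - 1")
    case True
    then have "R i s ! k = rev (take (i-1) s') ! k" unfolding R_def s using assms s
      by (simp add: nth_append)
    also have "\<dots> = s' ! (i - 1 - Suc k)" using True assms s by (simp add: rev_nth)
    also have "\<dots> = s ! (i - 1 - k)" using True s by (simp add: Suc_diff_Suc)
    finally show ?thesis using True by simp
  next
    case False
    then have "R i s ! k = drop (i-1) s' ! (k - (i - 1))" unfolding R_def s using assms s
      by (simp add: nth_append min_def)
    also have "\<dots> = s' ! k" using False assms s by simp
    also have "\<dots> = s ! (k + 1)" using s by simp
    finally show ?thesis using False by simp
  qed
qed

lemma R_pos:
  assumes "pos F s" "1 \<le> i" "i < length s"
    "\<And>k. k < length s - 1 \<Longrightarrow> F (if k < i - 1 then i - 1 - k else k + 1) \<subseteq> G k"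
  shows "pos G (R i s)"
  unfolding pos_iff
proof (intro allI impI)
  fix k assume k: "k < length (R i s)"
  then have k': "k < length s - 1" using R_len[of i s] assms(2,3) by simp
  have "(if k < i - 1 then i - 1 - k else k + 1) < length s" using k' assms(2,3) by auto
  then have "s ! (if k < i - 1 then i - 1 - k else k + 1) \<in> F (if k < i - 1 then i - 1 - k else k + 1)"
    using assms(1) by (simp add: pos_iff)
  then show "R i s ! k \<in> G k" using R_nth[OF assms(2,3) k'] assms(4)[OF k'] by auto
qed

lemma R_pos2:
  assumes "pos F s" "1 \<le> i" "i < length s"
    "\<And>j k. j + k + 1 = i \<Longrightarrow> 1 \<le> j \<Longrightarrow> F j \<subseteq> G k"
    "\<And>k. i \<le> k + 1 \<Longrightarrow> k + 2 \<le> length s \<Longrightarrow> F (k + 1) \<subseteq> G k"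
  shows "pos G (R i s)"
proof (rule R_pos[OF assms(1,2,3)])
  fix k assume k: "k < length s - 1"
  show "F (if k < i - 1 then i - 1 - k else k + 1) \<subseteq> G k"
  proof (cases "k < i - 1")
    case True
    have "(i - 1 - k) + k + 1 = i" "1 \<le> i - 1 - k" using True by auto
    then show ?thesis using True assms(4) by simp
  next
    case False
    have "i \<le> k + 1" "k + 2 \<le> length s" using False k by auto
    then show ?thesis using False assms(5) by simp
  qed
qed

lemma count2_R: "1 \<le> i \<Longrightarrow> i < length s \<Longrightarrow> count2 (R i s) = count2 (tl s)"
proof -
  have "filter (\<lambda>x. x = 2) (tl s) = filter (\<lambda>x. x = 2) (take (i-1) (tl s)) @ filter (\<lambda>x. x = 2) (drop (i-1) (tl s))"
    by (metis append_take_drop_id filter_append)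
  then show ?thesis by (simp add: count2_def R_def rev_filter[symmetric])
qed

lemma count2_tl: "s \<noteq> [] \<Longrightarrow> s!0 \<noteq> 2 \<Longrightarrow> count2 (tl s) = count2 s"
  by (cases s) (auto simp: count2_def)

lemma count2_two: "p \<noteq> q \<Longrightarrow> p < length t \<Longrightarrow> q < length t \<Longrightarrow> t!p = 2 \<Longrightarrow> t!q = 2 \<Longrightarrow> 2 \<le> count2 t"
proof -
  assume a: "p \<noteq> q" "p < length t" "q < length t" "t!p = 2" "t!q = 2"
  have "count2 t = card {k. k < length t \<and> t!k = 2}" by (simp add: count2_def length_filter_conv_card)
  moreover have "{p,q} \<subseteq> {k. k < length t \<and> t!k = 2}" using a by auto
  moreover have "finite {k. k < length t \<and> t!k = 2}" by simp
  ultimately have "card {p,q} \<le> count2 t" by (metis card_mono)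
  then show ?thesis using a(1) by simp
qed

lemma l0: "i < length s \<Longrightarrow> 0 < length s" by (cases s) auto

lemma cl_IIa:
  assumes "PIIa s" "1 \<le> i" "i < length s" "s!i = s!0" "4 \<le> length s"
  shows "PIIb (R i s)"
proof -
  have p: "pos (E {0,1} {2}) s" "even (length s)" using assms(1) by (auto simp: PIIa_def)
  have "s!0 \<in> E {0,1} {2} 0" "s!i \<in> E {0,1} {2} i" using posD[OF p(1) l0[OF assms(3)]] posD[OF p(1) assms(3)] by auto
  then have ei: "even i" using assms(4) by (auto simp: E_def split: if_splits)
  have "pos (E {2} {0,1}) (R i s)"
    by (rule R_pos2[OF p(1) assms(2,3)]) (use ei in \<open>auto simp: E_def\<close>)
  moreover have "length (R i s) = length s - 1" using R_len assms(2,3) by simp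
  ultimately show ?thesis using p assms(2,3,5) ei by (auto simp: PIIb_def)
qed

lemma cl_IIb:
  assumes "PIIb s" "1 \<le> i" "i < length s" "s!i = s!0" "4 \<le> length s"
  shows "PIIa (R i s)"
proof -
  have p: "pos (E {2} {0,1}) s" "odd (length s)" using assms(1) by (auto simp: PIIb_def)
  have "s!0 \<in> E {2} {0,1} 0" "s!i \<in> E {2} {0,1} i" using posD[OF p(1) l0[OF assms(3)]] posD[OF p(1) assms(3)] by auto
  then have ei: "even i" using assms(4) by (auto simp: E_def split: if_splits)
  have "pos (E {0,1} {2}) (R i s)"
    by (rule R_pos2[OF p(1) assms(2,3)]) (use ei in \<open>auto simp: E_def\<close>)
  moreover have "length (R i s) = length s - 1" using R_len assms(2,3) by simp
  ultimately show ?thesis using p assms(2,3,5) ei by (auto simp: PIIa_def)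
qed

lemma cl_IIIa:
  assumes "PIIIa s" "1 \<le> i" "i < length s" "s!i = s!0" "4 \<le> length s"
  shows "PIIIb (R i s)"
proof -
  obtain q where qn: "length s = q + 1" using assms(5) by (intro that[of "length s - 1"]) auto
  have p: "pos (FIIIa (q + 1)) s" "even q" "4 \<le> q" using assms(1,5) qn by (auto simp: PIIIa_def)
  have "s!0 \<in> FIIIa (q + 1) 0" "s!i \<in> FIIIa (q + 1) i" using posD[OF p(1) l0[OF assms(3)]] posD[OF p(1) assms(3)] by auto
  then have ei: "even i \<or> i = q" using assms(4) p(3) by (auto simp: FIIIa_def E_def split: if_splits)
  have "pos (FIIIb q) (R i s)"
    by (rule R_pos2[OF p(1) assms(2,3)]) (use ei p(2,3) qn assms(3) in \<open>auto simp: FIIIa_def FIIIb_def E_def\<close>)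
  moreover have "length (R i s) = q" using R_len assms(2,3) qn by simp
  ultimately show ?thesis using p by (auto simp: PIIIb_def)
qed

lemma cl_IIIb:
  assumes "PIIIb s" "1 \<le> i" "i < length s" "s!i = s!0" "4 \<le> length s"
  shows "PIIIa (R i s)"
proof -
  obtain q where qn: "length s = q + 1" using assms(5) by (intro that[of "length s - 1"]) auto
  have p: "pos (FIIIb (q + 1)) s" "odd q" "3 \<le> q" using assms(1,5) qn by (auto simp: PIIIb_def)
  have "s!0 \<in> FIIIb (q + 1) 0" "s!i \<in> FIIIb (q + 1) i" using posD[OF p(1) l0[OF assms(3)]] posD[OF p(1) assms(3)] by auto
  then have ei: "even i" "i \<noteq> q" using assms(4) p(3) by (auto simp: FIIIb_def E_def split: if_splits)
  have "pos (FIIIa q) (R i s)"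
    by (rule R_pos2[OF p(1) assms(2,3)]) (use ei p(2,3) qn assms(3) in \<open>auto simp: FIIIa_def FIIIb_def E_def\<close>)
  moreover have "length (R i s) = q" using R_len assms(2,3) qn by simp
  ultimately show ?thesis using p by (auto simp: PIIIa_def)
qed

lemma cl_IVa:
  assumes "PIVa s" "1 \<le> i" "i < length s" "s!i = s!0" "4 \<le> length s"
  shows "PIIIa (R i s) \<or> PIVb (R i s)"
proof -
  obtain q where qn: "length s = q + 1" using assms(5) by (intro that[of "length s - 1"]) auto
  have p: "pos (FIVa (q + 1)) s" "odd q" "3 \<le> q" "2 \<le> count2 s" using assms(1,5) qn by (auto simp: PIVa_def)
  have h: "s!0 \<in> FIVa (q + 1) 0" "s!i \<in> FIVa (q + 1) i" using posD[OF p(1) l0[OF assms(3)]] posD[OF p(1) assms(3)] by auto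
  then have ei: "(even i \<and> i + 1 \<le> q) \<or> (i = q \<and> s!0 = 2)" using assms(3,4) p(2,3) qn
    by (auto simp: FIVa_def E_def split: if_splits)
  have lR: "length (R i s) = q" using R_len assms(2,3) qn by simp
  show ?thesis
  proof (cases "i = q")
    case True
    have "pos (FIIIa q) (R i s)"
      by (rule R_pos2[OF p(1) assms(2,3)]) (use True p(2,3) qn in \<open>auto simp: FIVa_def FIIIa_def E_def\<close>)
    then have "PIIIa (R i s)" using lR p(2,3) by (auto simp: PIIIa_def)
    then show ?thesis by simp
  next
    case False
    then have ei': "even i" "i + 1 \<le> q" using ei by auto
    have pR: "pos (FIVb q) (R i s)"
      by (rule R_pos2[OF p(1) assms(2,3)]) (use ei' p(2,3) qn in \<open>auto simp: FIVa_def FIVb_def E_def\<close>)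
    have "2 \<le> count2 (R i s)"
    proof (cases "s!0 = 2")
      case False
      then show ?thesis using count2_R[OF assms(2,3)] count2_tl[of s] p(4) l0[OF assms(3)] by auto
    next
      case True
      have a1: "R i s ! (i - 1) = s ! i" using R_nth[OF assms(2,3), of "i-1"] assms(2) ei' qn by simp
      have "\<not> (q - 1 < i - 1)" using ei' by arith
      then have a2: "R i s ! (q - 1) = s ! q" using R_nth[OF assms(2,3), of "q-1"] assms(2) p(3) ei' qn by simp
      have a3: "s ! q = 2" using posD[OF p(1), of q] qn by (simp add: FIVa_def)
      show ?thesis using count2_two[of "i-1" "q-1" "R i s"] a1 a2 a3 True assms(2,4) lR ei' p(3) by auto
    qed
    have "q \<noteq> 3"
    proof
      assume q3: "q = 3"
      have t3: "R i s = [R i s ! 0, R i s ! 1, R i s ! 2]" using lR q3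
        by (cases "R i s"; cases "tl (R i s)"; cases "tl (tl (R i s))") auto
      have "R i s ! 0 \<in> FIVb q 0" "R i s ! 1 \<in> FIVb q 1" "R i s ! 2 \<in> FIVb q 2"
        using posD[OF pR] lR q3 by auto
      then have "R i s = [0,1,2]" using t3 q3 by (simp add: FIVb_def)
      then show False using \<open>2 \<le> count2 (R i s)\<close> by (simp add: count2_def)
    qed
    then have "5 \<le> q" using p(2,3) by presburger
    then have "PIVb (R i s)" using lR p(2,3) pR \<open>2 \<le> count2 (R i s)\<close> by (auto simp: PIVb_def)
    then show ?thesis by simp
  qed
qed

lemma cl_IVb:
  assumes "PIVb s" "1 \<le> i" "i < length s" "s!i = s!0" "4 \<le> length s"
  shows "PIVa (R i s)"
proof -
  obtain q where qn: "length s = q + 1" using assms(5) by (intro that[of "length s - 1"]) auto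
  have p: "pos (FIVb (q + 1)) s" "even q" "4 \<le> q" "2 \<le> count2 s" using assms(1,5) qn by (auto simp: PIVb_def)
  have h: "s!0 \<in> FIVb (q + 1) 0" "s!i \<in> FIVb (q + 1) i" using posD[OF p(1) l0[OF assms(3)]] posD[OF p(1) assms(3)] by auto
  then have ei: "even i" "i + 2 \<le> q" "s!0 = 0" using assms(3,4) p(2,3) qn
    by (auto simp: FIVb_def E_def split: if_splits)
  have lR: "length (R i s) = q" using R_len assms(2,3) qn by simp
  have pR: "pos (FIVa q) (R i s)"
    by (rule R_pos2[OF p(1) assms(2,3)]) (use ei p(2,3) qn in \<open>auto simp: FIVa_def FIVb_def E_def\<close>)
  have "2 \<le> count2 (R i s)"
    using count2_R[OF assms(2,3)] count2_tl[of s] p(4) l0[OF assms(3)] ei(3) by auto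
  then show ?thesis using lR p(2,3) pR by (auto simp: PIVa_def)
qed

lemma cl_Va:
  assumes "PVa s" "1 \<le> i" "i < length s" "s!i = s!0" "4 \<le> length s"
  shows "PVb (R i s)"
proof -
  obtain q where qn: "length s = q + 1" using assms(5) by (intro that[of "length s - 1"]) auto
  have p: "pos (FVa (q + 1)) s" "odd q" "3 \<le> q" using assms(1,5) qn by (auto simp: PVa_def)
  have h: "s!0 \<in> FVa (q + 1) 0" "s!i \<in> FVa (q + 1) i" using posD[OF p(1) l0[OF assms(3)]] posD[OF p(1) assms(3)] by auto
  then have ei: "even i" "i + 3 \<le> q" using assms(3,4) p(2,3) qn
    by (auto simp: FVa_def E_def split: if_splits)
  have lR: "length (R i s) = q" using R_len assms(2,3) qn by simp
  have pR: "pos (FVb q) (R i s)"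
    by (rule R_pos2[OF p(1) assms(2,3)]) (use ei p(2,3) qn in \<open>auto simp: FVa_def FVb_def E_def\<close>)
  have "5 \<le> q" using ei assms(2) p(2) by presburger
  then show ?thesis using lR p(2) pR by (auto simp: PVb_def)
qed

lemma cl_Vb:
  assumes "PVb s" "1 \<le> i" "i < length s" "s!i = s!0" "4 \<le> length s"
  shows "PIVa (R i s) \<or> PVa (R i s)"
proof -
  obtain q where qn: "length s = q + 1" using assms(5) by (intro that[of "length s - 1"]) auto
  have p: "pos (FVb (q + 1)) s" "even q" "4 \<le> q" using assms(1,5) qn by (auto simp: PVb_def)
  have h: "s!0 \<in> FVb (q + 1) 0" "s!i \<in> FVb (q + 1) i" using posD[OF p(1) l0[OF assms(3)]] posD[OF p(1) assms(3)] by auto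
  then have ei: "(even i \<and> i + 4 \<le> q) \<or> i + 1 = q" using assms(3,4) p(2,3) qn
    by (auto simp: FVb_def E_def split: if_splits; presburger)
  have lR: "length (R i s) = q" using R_len assms(2,3) qn by simp
  show ?thesis
  proof (cases "i + 1 = q")
    case True
    have pR: "pos (FIVa q) (R i s)"
      by (rule R_pos2[OF p(1) assms(2,3)]) (use True p(2,3) qn in \<open>auto simp: FIVa_def FVb_def E_def\<close>)
    have "i - 1 = q - 2" using True by arith
    then have a1: "R i s ! 0 = s ! (q - 2)" using R_nth[OF assms(2,3), of 0] True p(3) qn by simp
    have "\<not> (q - 1 < i - 1)" "q - 1 + 1 = q" using True p(3) by arith+
    then have a2: "R i s ! (q - 1) = s ! q" using R_nth[OF assms(2,3), of "q-1"] True p(3) qn by simp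
    have a3: "s ! q = 2" using posD[OF p(1), of q] qn by (simp add: FVb_def)
    have "q - 2 \<noteq> q" "q - 2 + 2 \<noteq> Suc q" "q - 2 + 3 = Suc q" "q - 2 < Suc q" using p(3) by arith+
    then have a4: "s ! (q - 2) = 2" using posD[OF p(1), of "q - 2"] qn by (simp add: FVb_def)
    have "2 \<le> count2 (R i s)" using count2_two[of 0 "q-1" "R i s"] a1 a2 a3 a4 lR p(3) by auto
    then show ?thesis using lR p(2,3) pR by (auto simp: PIVa_def)
  next
    case False
    then have ei': "even i" "i + 4 \<le> q" using ei by auto
    have pR: "pos (FVa q) (R i s)"
      by (rule R_pos2[OF p(1) assms(2,3)]) (use ei' p(2,3) qn in \<open>auto simp: FVa_def FVb_def E_def\<close>)
    then show ?thesis using lR p(2,3) by (auto simp: PVa_def)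
  qed
qed

lemma cl_VI:
  assumes "PVI a b s" "1 \<le> i" "i < length s" "s!i = s!0" "a \<in> {0,1}" "b \<in> {0,1}" "a \<noteq> b"
  shows "PIIa (R i s)"
proof -
  obtain m where p: "odd m" "3 \<le> m" "odd (length s)" "m + 2 \<le> length s" "pos (FVI a b m) s"
    using assms(1) unfolding PVI_def by blast
  have h: "s!0 \<in> FVI a b m 0" "s!i \<in> FVI a b m i" using posD[OF p(5) l0[OF assms(3)]] posD[OF p(5) assms(3)] by auto
  then have im: "i = m" using assms(2,4,5,6,7) by (auto simp: FVI_def E_def split: if_splits)
  have pR: "pos (E {0,1} {2}) (R i s)"
    by (rule R_pos2[OF p(5) assms(2,3)]) (use im p(1,2) assms(5,6) in \<open>auto simp: FVI_def E_def\<close>)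
  have lR: "length (R i s) = length s - 1" using R_len assms(2,3) by simp
  show ?thesis using lR pR p(2,3,4) by (auto simp: PIIa_def)
qed

lemma cl_VII:
  assumes "PVII s" "1 \<le> i" "i < length s" "s!i = s!0"
  shows "PIIIa (R i s)"
proof -
  obtain m where p: "odd m" "3 \<le> m" "even (length s)" "m + 3 \<le> length s" "pos (FVII m) s"
    using assms(1) unfolding PVII_def by blast
  obtain q where qn: "length s = q + 1" using p(4) by (intro that[of "length s - 1"]) auto
  have h: "s!0 \<in> FVII m 0" "s!i \<in> FVII m i" using posD[OF p(5) l0[OF assms(3)]] posD[OF p(5) assms(3)] by auto
  then have im: "i = m" using assms(2,4) by (auto simp: FVII_def E_def split: if_splits)
  have pR: "pos (FIIIa q) (R i s)"
    by (rule R_pos2[OF p(5) assms(2,3)]) (use im p(1-4) qn in \<open>auto simp: FVII_def FIIIa_def E_def\<close>)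
  have lR: "length (R i s) = q" using R_len assms(2,3) qn by simp
  show ?thesis using lR pR p(2,3,4) qn by (auto simp: PIIIa_def)
qed

lemma cl_VIII:
  assumes "PVIII s" "1 \<le> i" "i < length s" "s!i = s!0" "4 \<le> length s"
  shows "PIVa (R i s)"
proof -
  obtain q where qn: "length s = q + 1" using assms(5) by (intro that[of "length s - 1"]) auto
  have p: "pos (FVIII (q + 1)) s" "even q" "4 \<le> q" using assms(1,5) qn by (auto simp: PVIII_def)
  have h: "s!0 \<in> FVIII (q + 1) 0" "s!i \<in> FVIII (q + 1) i" using posD[OF p(1) l0[OF assms(3)]] posD[OF p(1) assms(3)] by auto
  then have ei: "i + 1 = q" using assms(2,3,4) p(2,3) qn
    by (auto simp: FVIII_def E_def split: if_splits)
  have lR: "length (R i s) = q" using R_len assms(2,3) qn by simp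
  have pR: "pos (FIVa q) (R i s)"
    by (rule R_pos2[OF p(1) assms(2,3)]) (use ei p(2,3) qn in \<open>auto simp: FIVa_def FVIII_def E_def\<close>)
  have "i - 1 = q - 2" using ei by arith
  then have a1: "R i s ! 0 = s ! (q - 2)" using R_nth[OF assms(2,3), of 0] ei p(3) qn by simp
  have "\<not> (q - 1 < i - 1)" "q - 1 + 1 = q" using ei p(3) by arith+
  then have a2: "R i s ! (q - 1) = s ! q" using R_nth[OF assms(2,3), of "q-1"] ei p(3) qn by simp
  have a3: "s ! q = 2" using posD[OF p(1), of q] qn p(3) by (simp add: FVIII_def)
  have "q - 2 + 2 = q" "q - 2 \<noteq> 0" "even (q - 2)" using p(2,3) by auto
  then have a4: "s ! (q - 2) = 2" using posD[OF p(1), of "q - 2"] qn p(3) by (simp add: FVIII_def E_def)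
  have "2 \<le> count2 (R i s)" using count2_two[of 0 "q-1" "R i s"] a1 a2 a3 a4 lR p(3) by auto
  then show ?thesis using lR p(2,3) pR by (auto simp: PIVa_def)
qed

definition "PI s \<longleftrightarrow> odd (length s) \<and> 5 \<le> length s \<and> pos FI s"

definition "PVIe a b s \<longleftrightarrow> (\<exists>m\<in>set [0..<length s]. odd m \<and> 3 \<le> m \<and> odd (length s) \<and> m + 2 \<le> length s \<and> pos (FVI a b m) s)"
definition "PVIIe s \<longleftrightarrow> (\<exists>m\<in>set [0..<length s]. odd m \<and> 3 \<le> m \<and> even (length s) \<and> m + 3 \<le> length s \<and> pos (FVII m) s)"

lemma PVIe: "PVIe a b s = PVI a b s"
  unfolding PVIe_def PVI_def by auto
lemma PVIIe: "PVIIe s = PVII s"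
  unfolding PVIIe_def PVII_def by auto

definition "typesE s \<longleftrightarrow> PI s \<or> PIIa s \<or> PIIb s \<or> PIIIa s \<or> PIIIb s \<or> PIVa s \<or> PIVb s \<or> PVa s \<or> PVb s \<or>
   PVIe 1 0 s \<or> PVIe 0 1 s \<or> PVIIe s \<or> PVIII s \<or> s \<in> set exceptional_strings"

definition "types s \<longleftrightarrow> typeI s \<or> typeII s \<or> typeIII s \<or> typeIV s \<or> typeV s \<or> typeVI s \<or>
      typeVII s \<or> typeVIII s \<or> typeIX s"

lemma types_E: "types s \<longleftrightarrow> typesE s"
  unfolding types_def typesE_def PVIe PVIIe typeI_pos typeII_pos typeIII_pos typeIV_pos typeV_pos
    typeVI_pos typeVII_pos typeVIII_pos typeIX_def PI_def by blast

lemma exc_check: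
  "list_all (\<lambda>s. list_all (\<lambda>i. s!i \<noteq> s!0 \<or> typesE (R i s)) [1..<length s]) exceptional_strings"
  by code_simp

lemma not_types_012: "\<not> types [0,1,2]"
  unfolding types_E by code_simp

lemma closure_types:
  assumes "typesE s" "4 \<le> length s" "1 \<le> i" "i < length s" "s!i = s!0"
  shows "typesE (R i s)"
proof -
  have c: "PI s \<or> PIIa s \<or> PIIb s \<or> PIIIa s \<or> PIIIb s \<or> PIVa s \<or> PIVb s \<or> PVa s \<or> PVb s \<or>
   PVI 1 0 s \<or> PVI 0 1 s \<or> PVII s \<or> PVIII s \<or> s \<in> set exceptional_strings"
    using assms(1) unfolding typesE_def PVIe PVIIe .
  show ?thesis
  proof -
    {
      assume "PI s"
      then have p: "pos FI s" by (simp add: PI_def)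
      have "s!0 \<in> FI 0" "s!i \<in> FI i" using posD[OF p l0[OF assms(4)]] posD[OF p assms(4)] by auto
      then have False using assms(3,5) by (auto simp: FI_def E_def split: if_splits)
    }
    moreover
    {
      assume "s \<in> set exceptional_strings"
      then have "list_all (\<lambda>i. s!i \<noteq> s!0 \<or> typesE (R i s)) [1..<length s]"
        using exc_check by (simp add: list_all_iff)
      then have "typesE (R i s)" using assms(3,4,5) by (simp add: list_all_iff)
    }
    moreover have "PVI 1 0 s \<Longrightarrow> PIIa (R i s)" using cl_VI[OF _ assms(3,4,5), of 1 0] by simp
    moreover have "PVI 0 1 s \<Longrightarrow> PIIa (R i s)" using cl_VI[OF _ assms(3,4,5), of 0 1] by simp
    ultimately show ?thesis using c
      cl_IIa[OF _ assms(3,4,5,2)] cl_IIb[OF _ assms(3,4,5,2)] cl_IIIa[OF _ assms(3,4,5,2)]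
      cl_IIIb[OF _ assms(3,4,5,2)] cl_IVa[OF _ assms(3,4,5,2)] cl_IVb[OF _ assms(3,4,5,2)]
      cl_Va[OF _ assms(3,4,5,2)] cl_Vb[OF _ assms(3,4,5,2)]
      cl_VII[OF _ assms(3,4,5)]
      cl_VIII[OF _ assms(3,4,5,2)]
      unfolding typesE_def PVIe PVIIe by blast
  qed
qed

lemma bad_iff: "bad s \<longleftrightarrow> normalized s \<and> fully_ternary s \<and> s \<noteq> [] \<and> last s = 2 \<and> types s"
  unfolding bad_def types_def by blast

lemma closure:
  assumes "bad s" "4 \<le> length s" "1 \<le> i" "i < length s" "s!i = s!0"
  shows "bad (R i s)"
proof -
  have b: "normalized s" "fully_ternary s" "last s = 2" "types s" using assms(1) bad_iff by auto
  have "normalized (R i s)" using R_norm[OF b(1) assms(3,4,5)] .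
  moreover have "fully_ternary (R i s)" using R_set[OF assms(3,4)] tl_set[OF assms(3,4,5)] b(2) by (simp add: ft_set)
  moreover have "R i s \<noteq> []" using R_len[of i s] assms(2,3,4) by auto
  moreover have "last (R i s) = 2" using R_last[OF assms(3,4)] b(3) by simp
  moreover have "types (R i s)" using closure_types[OF b(4)[unfolded types_E] assms(2-5)] types_E by simp
  ultimately show ?thesis using bad_iff by blast
qed

lemma flip_len:
  assumes "normalized s" "1 \<le> i" "i \<le> length s"
  shows "length s \<le> length (flip i s) + 1"
  using flip_norm[OF assms] R_len[of i s] assms(2,3) by (auto split: if_splits)

lemma flip_normalized: "normalized (flip i s)"
  by (simp add: flip_def normalization_def normalized_iff)

lemma lower_gen: "normalized s \<Longrightarrow> (flip_step ^^ k) s [0,1,2] \<Longrightarrow> length s \<le> k + 3"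
proof (induction k arbitrary: s)
  case 0 then show ?case by simp
next
  case (Suc k)
  from relpowp_Suc_E2[OF Suc.prems(2)] obtain t where t: "flip_step s t" "(flip_step ^^ k) t [0,1,2]" by blast
  then obtain i where i: "1 \<le> i" "i \<le> length s" "t = flip i s" by (auto simp: flip_step_def)
  have "length t \<le> k + 3" using Suc.IH[OF _ t(2)] i(3) flip_normalized by simp
  then show ?case using flip_len[OF Suc.prems(1) i(1,2)] i(3) by simp
qed

lemma lower_bad: "bad s \<Longrightarrow> (flip_step ^^ k) s [0,1,2] \<Longrightarrow> length s \<le> k + 2"
proof (induction k arbitrary: s)
  case 0
  then have "s = [0,1,2]" by simp
  then show ?case using 0 not_types_012 bad_iff by auto
next
  case (Suc k)
  have ns: "normalized s" using Suc.prems(1) bad_iff by auto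
  from relpowp_Suc_E2[OF Suc.prems(2)] obtain t where t: "flip_step s t" "(flip_step ^^ k) t [0,1,2]" by blast
  then obtain i where i: "1 \<le> i" "i \<le> length s" "t = flip i s" by (auto simp: flip_step_def)
  show ?case
  proof (cases "i < length s \<and> s!i = s!0")
    case True
    then have tR: "t = R i s" using flip_norm[OF ns i(1,2)] i(3) by simp
    show ?thesis
    proof (cases "4 \<le> length s")
      case True
      have "bad t" using closure[OF Suc.prems(1) True i(1)] \<open>i < length s \<and> s!i = s!0\<close> tR by simp
      then have "length t \<le> k + 2" using Suc.IH t(2) by blast
      then show ?thesis using tR R_len[of i s] i by simp
    next
      case False then show ?thesis by simp
    qed
  next
    case False
    have e: "flip i s = (if i < length s \<and> s!i = s!0 then R i s else rev (take i s) @ drop i s)"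
      by (rule flip_norm[OF ns i(1,2)])
    have "t = rev (take i s) @ drop i s" using e[unfolded if_not_P[OF False]] i(3) by simp
    then have "length t = length s" using i(2) by simp
    moreover have "length t \<le> k + 3" using lower_gen[OF _ t(2)] i(3) flip_normalized by simp
    ultimately show ?thesis by simp
  qed
qed

theorem lemma4p5:
  fixes s :: "nat list" and n :: nat
  assumes "bad s"
    and "s \<noteq> [0,2,1,2]"
    and "length s = n"
  shows "sorting_distance s = n - 2"
proof -
  have b: "normalized s" "fully_ternary s" "last s = 2" using assms(1) bad_iff by auto
  have up: "(flip_step ^^ (n - 2)) s [0,1,2]" using upper[OF b assms(2)] assms(3) by simp
  then have le: "sorting_distance s \<le> n - 2" unfolding sorting_distance_def by (rule Least_le)
  have "(flip_step ^^ sorting_distance s) s [0,1,2]" unfolding sorting_distance_def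
    using up by (rule LeastI)
  then have "n \<le> sorting_distance s + 2" using lower_bad[OF assms(1)] assms(3) by blast
  then show ?thesis using le by simp
qed


end
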